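(* Let $f,g>0$, let $\Omega\subset\mathbb{R}^2$ be a bounded convex domain, let $\mu$ be the Lebesgue measure restricted to $\Omega$, let $\sigma$ be a compactly supported finite positive Borel measure on $\mathbb{R}^2$, and let $\varepsilon>0$. With $K_\varepsilon(X,Y)=e^{-\|X-Y\|^2/(2\varepsilon)}$, consider the problem $$\sup_{\varphi\in\mathcal{C}(\Omega),\,\psi\in\mathcal{C}(\mathbb{R}^2)} \mathcal{D}_{\sigma,\varepsilon}(\varphi,\psi),\qquad \mathcal{D}_{\sigma,\varepsilon}(\varphi,\psi):=\int\psi(Y)\,d\sigma(Y)-\frac{f^2}{2g}\int_\Omega\varphi(X)^2\,d\mu(X)-\varepsilon\iint\Big(e^{(\varphi(X)+\psi(Y))/\varepsilon}K_\varepsilon(X,Y)-1\Big)\,d\mu(X)\,d\sigma(Y).$$ This problem has a unique solution $(\varphi_\varepsilon,\psi_\varepsilon)$, and: (i) it satisfies, for all $Y$ and all $X$, $$\psi_\varepsilon(Y)=-\varepsilon\log\Big(\int_\Omega e^{\varphi_\varepsilon(X)/\varepsilon}K_\varepsilon(X,Y)\,d\mu(X)\Big),\qquad \varphi_\varepsilon(X)=-\varepsilon\,W_0\Big(\frac{g}{\varepsilon f^2}\int e^{\psi_\varepsilon(Y)/\varepsilon}K_\varepsilon(X,Y)\,d\sigma(Y)\Big);$$ (ii) setting $h_\varepsilon:=-\frac{f^2}{g}\varphi_\varepsilon$, the pair $(\varphi_\varepsilon,\psi_\varepsilon)$ attains the supremum defining $\mathrm{OT}_\varepsilon(\sigma,h_\varepsilon\mu)$,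 and $h_\varepsilon$ is a minimiser of $$h\mapsto \mathrm{OT}_\varepsilon(\sigma,h\mu)+\frac{g}{2f^2}\int_\Omega h(X)^2\,d\mu(X)$$ over nonnegative $h\in L^2(\mu)$; (iii) for all $Y$, $$\nabla\psi_\varepsilon(Y)=Y-\int_\Omega X\,e^{(\varphi_\varepsilon(X)+\psi_\varepsilon(Y))/\varepsilon}K_\varepsilon(X,Y)\,d\mu(X).$$
   Context: $W_0$ denotes the principal ($0$-th) branch of the Lambert function, i.e. the inverse of $z\mapsto ze^z$ on $[0,\infty)$. For a nonnegative $h\in L^2(\mu)$, the entropic transport cost is defined by $$\mathrm{OT}_\varepsilon(\sigma,h\mu):=\sup_{\varphi\in\mathcal{C}(\Omega),\,\psi\in\mathcal{C}(\mathbb{R}^2)}\int\psi\,d\sigma+\int_\Omega\varphi\,h\,d\mu-\varepsilon\iint\Big(e^{(\varphi(X)+\psi(Y))/\varepsilon}K_\varepsilon(X,Y)-1\Big)\,d\mu(X)\,d\sigma(Y).$$ *)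

theory Defs
  imports "HOL-Analysis.Analysis"
begin

definition lambert_W0 :: "real \<Rightarrow> real" where
  "lambert_W0 y = (THE w. 0 \<le> w \<and> w * exp w = y)"

definition gauss_kernel :: "real \<Rightarrow> real^2 \<Rightarrow> real^2 \<Rightarrow> real" where
  "gauss_kernel \<epsilon> X Y = exp (- (norm (X - Y))\<^sup>2 / (2 * \<epsilon>))"

text \<open>The dual functional D_{sigma,eps}, with value -\<infinity> whenever one of its integrals
  does not exist as a finite Lebesgue integral (mu = Lebesgue measure on Omega).\<close>
definition dual_obj ::
  "real \<Rightarrow> real \<Rightarrow> (real^2) set \<Rightarrow> (real^2) measure \<Rightarrow> real
     \<Rightarrow> (real^2 \<Rightarrow> real) \<Rightarrow> (real^2 \<Rightarrow> real) \<Rightarrow> ereal" where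
  "dual_obj f g \<Omega> \<sigma> \<epsilon> \<phi> \<psi> =
    (if integrable \<sigma> \<psi>
        \<and> integrable (lebesgue_on \<Omega>) (\<lambda>X. (\<phi> X)\<^sup>2)
        \<and> integrable (lebesgue_on \<Omega> \<Otimes>\<^sub>M \<sigma>)
             (\<lambda>(X, Y). exp ((\<phi> X + \<psi> Y) / \<epsilon>) * gauss_kernel \<epsilon> X Y - 1)
     then ereal ((\<integral>Y. \<psi> Y \<partial>\<sigma>)
            - f\<^sup>2 / (2 * g) * (\<integral>X. (\<phi> X)\<^sup>2 \<partial>lebesgue_on \<Omega>)
            - \<epsilon> * integral\<^sup>L (lebesgue_on \<Omega> \<Otimes>\<^sub>M \<sigma>)
                 (\<lambda>(X, Y). exp ((\<phi> X + \<psi> Y) / \<epsilon>) * gauss_kernel \<epsilon> X Y - 1))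
     else -\<infinity>)"

definition dual_maximizer ::
  "real \<Rightarrow> real \<Rightarrow> (real^2) set \<Rightarrow> (real^2) measure \<Rightarrow> real
     \<Rightarrow> (real^2 \<Rightarrow> real) \<Rightarrow> (real^2 \<Rightarrow> real) \<Rightarrow> bool" where
  "dual_maximizer f g \<Omega> \<sigma> \<epsilon> \<phi> \<psi> \<longleftrightarrow>
     continuous_on \<Omega> \<phi> \<and> continuous_on UNIV \<psi> \<and>
     (\<forall>\<phi>' \<psi>'. continuous_on \<Omega> \<phi>' \<and> continuous_on UNIV \<psi>' \<longrightarrow>
        dual_obj f g \<Omega> \<sigma> \<epsilon> \<phi>' \<psi>' \<le> dual_obj f g \<Omega> \<sigma> \<epsilon> \<phi> \<psi>)"

definition ot_obj ::
  "real \<Rightarrow> (real^2) set \<Rightarrow> (real^2) measure \<Rightarrow> (real^2 \<Rightarrow> real)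
     \<Rightarrow> (real^2 \<Rightarrow> real) \<Rightarrow> (real^2 \<Rightarrow> real) \<Rightarrow> ereal" where
  "ot_obj \<epsilon> \<Omega> \<sigma> h \<phi> \<psi> =
    (if integrable \<sigma> \<psi>
        \<and> integrable (lebesgue_on \<Omega>) (\<lambda>X. \<phi> X * h X)
        \<and> integrable (lebesgue_on \<Omega> \<Otimes>\<^sub>M \<sigma>)
             (\<lambda>(X, Y). exp ((\<phi> X + \<psi> Y) / \<epsilon>) * gauss_kernel \<epsilon> X Y - 1)
     then ereal ((\<integral>Y. \<psi> Y \<partial>\<sigma>)
            + (\<integral>X. \<phi> X * h X \<partial>lebesgue_on \<Omega>)
            - \<epsilon> * integral\<^sup>L (lebesgue_on \<Omega> \<Otimes>\<^sub>M \<sigma>)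
                 (\<lambda>(X, Y). exp ((\<phi> X + \<psi> Y) / \<epsilon>) * gauss_kernel \<epsilon> X Y - 1))
     else -\<infinity>)"

definition entropic_OT ::
  "real \<Rightarrow> (real^2) set \<Rightarrow> (real^2) measure \<Rightarrow> (real^2 \<Rightarrow> real) \<Rightarrow> ereal" where
  "entropic_OT \<epsilon> \<Omega> \<sigma> h =
     (SUP p \<in> {(\<phi>, \<psi>). continuous_on \<Omega> \<phi> \<and> continuous_on UNIV \<psi>}.
        ot_obj \<epsilon> \<Omega> \<sigma> h (fst p) (snd p))"

definition nonneg_L2 :: "(real^2) set \<Rightarrow> (real^2 \<Rightarrow> real) \<Rightarrow> bool" where
  "nonneg_L2 \<Omega> h \<longleftrightarrow> h \<in> borel_measurable (lebesgue_on \<Omega>)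
     \<and> integrable (lebesgue_on \<Omega>) (\<lambda>X. (h X)\<^sup>2)
     \<and> (AE X in lebesgue_on \<Omega>. 0 \<le> h X)"

end

theory Submission
  imports Defs
begin

lemma wexp_strict_mono:
  fixes a b :: real assumes "0 \<le> a" "a < b" shows "a * exp a < b * exp b"
proof -
  have "exp a < exp b" using assms by simp
  hence "a * exp a \<le> a * exp b" using assms by (intro mult_left_mono) auto
  also have "\<dots> < b * exp b" using assms by (intro mult_strict_right_mono) auto
  finally show ?thesis .
qed

lemma wexp_lip:
  fixes a b :: real assumes "0 \<le> a" "a \<le> b" shows "b - a \<le> b * exp b - a * exp a"
proof -
  have "exp a \<le> exp b" using assms by simp
  hence "a * exp a \<le> a * exp b" using assms by (intro mult_left_mono) auto
  moreover have "(b - a) * 1 \<le> (b - a) * exp b" using assms by (intro mult_left_mono) auto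
  ultimately show ?thesis by (simp add: algebra_simps)
qed

lemma lambert_ex1:
  fixes y :: real assumes "0 \<le> y" shows "\<exists>!w. 0 \<le> w \<and> w * exp w = y"
proof -
  have "\<exists>w\<ge>0. w \<le> y \<and> w * exp w = y"
  proof (rule IVT')
    show "0 * exp 0 \<le> y" using assms by simp
    show "y \<le> y * exp y" using assms by (simp add: mult_le_cancel_left1)
    show "0 \<le> y" by fact
    show "continuous_on {0..y} (\<lambda>w. w * exp w)" by (intro continuous_intros)
  qed
  then obtain w where w: "0 \<le> w" "w * exp w = y" by auto
  show ?thesis
  proof (rule ex1I[of _ w])
    fix v assume v: "0 \<le> v \<and> v * exp v = y"
    show "v = w"
    proof (rule ccontr)
      assume "v \<noteq> w"
      then consider "v < w" | "w < v" by linarith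
      thus False using wexp_strict_mono[of v w] wexp_strict_mono[of w v] v w by cases auto
    qed
  qed (use w in auto)
qed

lemma lambert_W0:
  fixes y :: real assumes "0 \<le> y"
  shows "0 \<le> lambert_W0 y" "lambert_W0 y * exp (lambert_W0 y) = y"
  using theI'[OF lambert_ex1[OF assms]] unfolding lambert_W0_def by auto

lemma lambert_W0_eq:
  fixes w :: real assumes "0 \<le> w" shows "lambert_W0 (w * exp w) = w"
proof -
  have "0 \<le> w * exp w" using assms by simp
  from lambert_ex1[OF this] lambert_W0[OF this] assms show ?thesis by blast
qed

lemma lambert_W0_mono:
  fixes a b :: real assumes "0 \<le> a" "a \<le> b" shows "lambert_W0 a \<le> lambert_W0 b"
proof (rule ccontr)
  assume "\<not> ?thesis"
  hence "lambert_W0 b < lambert_W0 a" by simp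
  from wexp_strict_mono[OF lambert_W0(1) this] lambert_W0(2)[of a] lambert_W0(2)[of b] assms
  show False by auto
qed

lemma lambert_W0_le:
  fixes y m :: real assumes "0 \<le> y" "0 \<le> m" "y \<le> m * exp m" shows "lambert_W0 y \<le> m"
  using lambert_W0_mono[OF assms(1,3)] lambert_W0_eq[OF assms(2)] by simp

lemma lambert_W0_lip:
  fixes a b :: real assumes "0 \<le> a" "0 \<le> b" shows "\<bar>lambert_W0 a - lambert_W0 b\<bar> \<le> \<bar>a - b\<bar>"
proof -
  have *: "lambert_W0 b - lambert_W0 a \<le> b - a" if "0 \<le> a" "a \<le> b" for a b :: real
    using wexp_lip[OF lambert_W0(1)[of a] lambert_W0_mono[OF that]] lambert_W0(2)[of a]
      lambert_W0(2)[of b] that by auto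
  show ?thesis
  proof (cases "a \<le> b")
    case True
    with *[OF assms(1) True] lambert_W0_mono[OF assms(1) True] show ?thesis by auto
  next
    case False
    with *[OF assms(2)] lambert_W0_mono[OF assms(2)] show ?thesis by auto
  qed
qed

lemma lambert_W0_contr:
  fixes y1 y2 s m :: real
  assumes "0 \<le> y1" "0 \<le> y2" "y1 \<le> exp s * y2" "0 \<le> s" "lambert_W0 y1 \<le> m"
  shows "lambert_W0 y1 - lambert_W0 y2 \<le> s * (m / (1 + m))"
proof -
  define w1 w2 where "w1 = lambert_W0 y1" and "w2 = lambert_W0 y2"
  have w1: "0 \<le> w1" "w1 * exp w1 = y1" and w2: "0 \<le> w2" "w2 * exp w2 = y2"
    using lambert_W0 assms unfolding w1_def w2_def by auto
  have m0: "0 \<le> m" using w1 assms unfolding w1_def by linarith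
  show ?thesis
  proof (cases "w1 \<le> w2")
    case True
    have "0 \<le> s * (m / (1 + m))" using m0 assms by simp
    thus ?thesis using True unfolding w1_def w2_def by linarith
  next
    case False
    have "w2 \<noteq> 0"
    proof
      assume "w2 = 0"
      hence "y2 = 0" using w2 by simp
      hence "y1 = 0" using assms by (metis mult_zero_right order_antisym)
      hence "w1 = 0" using w1 by simp
      thus False using False \<open>w2 = 0\<close> by simp
    qed
    hence w2p: "0 < w2" using w2 by simp
    have w1p: "0 < w1" using False w2p by simp
    have "ln y1 = ln w1 + w1"
    proof -
      have "ln y1 = ln (w1 * exp w1)" using w1(2) by simp
      also have "\<dots> = ln w1 + ln (exp w1)" using w1p by (intro ln_mult_pos) auto
      finally show ?thesis by simp
    qed
    moreover have "ln y2 = ln w2 + w2"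
    proof -
      have "ln y2 = ln (w2 * exp w2)" using w2(2) by simp
      also have "\<dots> = ln w2 + ln (exp w2)" using w2p by (intro ln_mult_pos) auto
      finally show ?thesis by simp
    qed
    moreover have "ln y1 \<le> s + ln y2"
    proof -
      have "y1 > 0" "y2 > 0" using w1 w2 w1p w2p by auto
      hence "ln y1 \<le> ln (exp s * y2)" using assms by simp
      thus ?thesis using \<open>y2 > 0\<close> by (simp add: ln_mult)
    qed
    ultimately have A: "(w1 - w2) + ln (w1 / w2) \<le> s" using w1p w2p by (simp add: ln_div)
    have "ln (w1 / w2) \<ge> 1 - w2 / w1"
    proof -
      have "ln (w2 / w1) \<le> w2 / w1 - 1" using w1p w2p by (intro ln_le_minus_one) auto
      thus ?thesis using w1p w2p by (simp add: ln_div)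
    qed
    moreover have "(w1 - w2) * (1 + 1 / w1) = (w1 - w2) + (1 - w2 / w1)" using w1p
      by (simp add: field_simps)
    ultimately have "(w1 - w2) * (1 + 1 / w1) \<le> s" using A by linarith
    hence "w1 - w2 \<le> s * (w1 / (1 + w1))" using w1p by (simp add: field_simps)
    also have "\<dots> \<le> s * (m / (1 + m))"
    proof (intro mult_left_mono)
      show "w1 / (1 + w1) \<le> m / (1 + m)" using assms w1p m0 unfolding w1_def
        by (simp add: field_simps)
    qed (use assms in auto)
    finally show ?thesis unfolding w1_def w2_def .
  qed
qed

lemma exp_taylor2:
  fixes t :: real assumes "\<bar>t\<bar> \<le> 1" shows "\<bar>exp t - 1 - t\<bar> \<le> t\<^sup>2"
proof -
  have lo: "0 \<le> exp t - 1 - t" using exp_ge_add_one_self[of t] by linarith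
  have "exp t - 1 - t \<le> t\<^sup>2"
  proof (cases "t \<ge> 0")
    case True thus ?thesis using exp_bound[of t] assms by simp
  next
    case False
    define u where "u = - t"
    have u: "0 < u" "u \<le> 1" using False assms unfolding u_def by auto
    have "exp u \<ge> 1 + u" by (rule exp_ge_add_one_self)
    hence "exp t \<le> 1 / (1 + u)" using u unfolding u_def by (simp add: exp_minus field_simps)
    also have "1 / (1 + u) \<le> 1 - u + u\<^sup>2"
    proof -
      have "1 \<le> (1 - u + u\<^sup>2) * (1 + u)" using u by (simp add: algebra_simps power2_eq_square power3_eq_cube)
      thus ?thesis using u by (simp add: field_simps)
    qed
    finally show ?thesis unfolding u_def by (simp add: power2_eq_square)
  qed
  with lo show ?thesis by simp
qed

lemma gauss_kernel_pos: "0 < gauss_kernel e X Y" by (simp add: gauss_kernel_def)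
lemma gauss_kernel_le1:
  assumes "e > 0" shows "gauss_kernel e X Y \<le> 1"
  using assms by (simp add: gauss_kernel_def)
lemma gauss_kernel_sym: "gauss_kernel e X Y = gauss_kernel e Y X"
  by (simp add: gauss_kernel_def norm_minus_commute)

lemma gauss_kernel_shift:
  "gauss_kernel e X (Y + h) = gauss_kernel e X Y * exp ((2 * ((X - Y) \<bullet> h) - (norm h)\<^sup>2) / (2 * e))"
proof -
  have "(norm (X - (Y + h)))\<^sup>2 = (norm (X - Y))\<^sup>2 - 2 * ((X - Y) \<bullet> h) + (norm h)\<^sup>2"
  proof -
    have "X - (Y + h) = (X - Y) - h" by simp
    thus ?thesis by (simp only: power2_norm_eq_inner inner_diff_left inner_diff_right inner_commute) simp
  qed
  thus ?thesis unfolding gauss_kernel_def by (simp add: exp_add[symmetric] diff_divide_distrib add_divide_distrib)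
qed

lemma gauss_kernel_lower:
  assumes "e > 0" "norm X \<le> R1" "norm Y \<le> R2"
  shows "exp (- (R1 + R2)\<^sup>2 / (2 * e)) \<le> gauss_kernel e X Y"
proof -
  have "norm (X - Y) \<le> R1 + R2" using norm_triangle_ineq4[of X Y] assms by linarith
  hence "(norm (X - Y))\<^sup>2 \<le> (R1 + R2)\<^sup>2" by (intro power_mono) auto
  thus ?thesis unfolding gauss_kernel_def using assms by (simp add: divide_right_mono)
qed

lemma gauss_kernel_quad:
  assumes e: "e > 0" and X: "norm X \<le> R" and R: "0 \<le> R" and h: "norm h \<le> 1"
    and h2: "norm h * ((2 * (R + norm Y) + 1) / (2 * e)) \<le> 1"
  shows "\<bar>gauss_kernel e X (Y + h) - gauss_kernel e X Y - gauss_kernel e X Y * ((X - Y) \<bullet> h) / e\<bar>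
         \<le> (((2 * (R + norm Y) + 1) / (2 * e))\<^sup>2 + 1 / (2 * e)) * (norm h)\<^sup>2"
proof -
  define K where "K = gauss_kernel e X Y"
  define c1 where "c1 = (2 * (R + norm Y) + 1) / (2 * e)"
  define t where "t = (2 * ((X - Y) \<bullet> h) - (norm h)\<^sup>2) / (2 * e)"
  have K: "0 < K" "K \<le> 1" unfolding K_def using gauss_kernel_pos gauss_kernel_le1 e by auto
  have nXY: "norm (X - Y) \<le> R + norm Y" using norm_triangle_ineq4[of X Y] X by linarith
  have "\<bar>(X - Y) \<bullet> h\<bar> \<le> norm (X - Y) * norm h" by (rule Cauchy_Schwarz_ineq2)
  also have "\<dots> \<le> (R + norm Y) * norm h" using nXY by (intro mult_right_mono) auto
  finally have ip: "\<bar>(X - Y) \<bullet> h\<bar> \<le> (R + norm Y) * norm h" .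
  have "norm h * norm h \<le> norm h * 1" using h by (intro mult_left_mono) auto
  hence hh: "(norm h)\<^sup>2 \<le> norm h" by (simp add: power2_eq_square)
  have "\<bar>2 * ((X - Y) \<bullet> h) - (norm h)\<^sup>2\<bar> \<le> 2 * ((R + norm Y) * norm h) + norm h"
    using ip hh zero_le_power2[of "norm h"] unfolding abs_le_iff by linarith
  also have "\<dots> = (2 * (R + norm Y) + 1) * norm h" by (simp add: algebra_simps)
  finally have "\<bar>t\<bar> \<le> c1 * norm h" unfolding t_def c1_def using e by (simp add: field_simps)
  hence tb: "\<bar>t\<bar> \<le> c1 * norm h" .
  have t1: "\<bar>t\<bar> \<le> 1" using tb h2 unfolding c1_def by (simp add: mult.commute)
  have c1p: "0 \<le> c1" unfolding c1_def using e R by simp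
  have t2: "t\<^sup>2 \<le> c1\<^sup>2 * (norm h)\<^sup>2"
  proof -
    have "t\<^sup>2 = \<bar>t\<bar>\<^sup>2" by simp
    also have "\<dots> \<le> (c1 * norm h)\<^sup>2" using tb by (intro power_mono) auto
    finally show ?thesis by (simp add: power_mult_distrib)
  qed
  have eq: "gauss_kernel e X (Y + h) - K - K * ((X - Y) \<bullet> h) / e
      = K * (exp t - 1 - t) - K * ((norm h)\<^sup>2 / (2 * e))"
    unfolding gauss_kernel_shift K_def[symmetric] t_def using e by (simp add: field_simps)
  have "\<bar>K * (exp t - 1 - t) - K * ((norm h)\<^sup>2 / (2 * e))\<bar>
        \<le> \<bar>K * (exp t - 1 - t)\<bar> + \<bar>K * ((norm h)\<^sup>2 / (2 * e))\<bar>" by (rule abs_triangle_ineq4)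
  also have "\<bar>K * (exp t - 1 - t)\<bar> \<le> 1 * t\<^sup>2"
    unfolding abs_mult using K exp_taylor2[OF t1] by (intro mult_mono) auto
  also have "\<bar>K * ((norm h)\<^sup>2 / (2 * e))\<bar> \<le> 1 * ((norm h)\<^sup>2 / (2 * e))"
    unfolding abs_mult using K e by (intro mult_mono) auto
  finally have "\<bar>K * (exp t - 1 - t) - K * ((norm h)\<^sup>2 / (2 * e))\<bar> \<le> c1\<^sup>2 * (norm h)\<^sup>2 + (norm h)\<^sup>2 / (2 * e)"
    using t2 by simp
  thus ?thesis using eq unfolding K_def c1_def by (simp add: algebra_simps)
qed

lemma gauss_param_deriv:
  fixes M :: "(real^2) measure" and w :: "real^2 \<Rightarrow> real" and e R B :: real
  assumes fin: "finite_measure M" and e: "e > 0"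
    and wm: "w \<in> borel_measurable M" and idm: "(\<lambda>x. x) \<in> M \<rightarrow>\<^sub>M borel"
    and Rb: "AE X in M. norm X \<le> R" and Bb: "AE X in M. \<bar>w X\<bar> \<le> B" and R0: "0 \<le> R" and B0: "0 \<le> B"
  shows "((\<lambda>Y. \<integral>X. w X * gauss_kernel e X Y \<partial>M) has_derivative
           (\<lambda>v. (\<integral>X. (w X * gauss_kernel e X Y / e) *\<^sub>R (X - Y) \<partial>M) \<bullet> v)) (at Y)"
proof -
  interpret finite_measure M by fact
  have Km[measurable]: "(\<lambda>X. gauss_kernel e X Z) \<in> borel_measurable M" for Z
    unfolding gauss_kernel_def by (intro measurable_compose[OF idm]) (measurable)
  have intK: "integrable M (\<lambda>X. w X * gauss_kernel e X Z)" for Z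
  proof (rule Bochner_Integration.integrable_bound[OF integrable_const[of B]])
    show "(\<lambda>X. w X * gauss_kernel e X Z) \<in> borel_measurable M" using wm Km by measurable
    show "AE X in M. norm (w X * gauss_kernel e X Z) \<le> norm B"
      using Bb proof eventually_elim
      case (elim X)
      have "\<bar>w X\<bar> * gauss_kernel e X Z \<le> B * 1"
        using elim gauss_kernel_pos[of e X Z] gauss_kernel_le1[OF e, of X Z]
        by (intro mult_mono) auto
      thus ?case using gauss_kernel_pos[of e X Z] by (simp add: abs_mult)
    qed
  qed
  have vm: "(\<lambda>X. (w X * gauss_kernel e X Y / e) *\<^sub>R (X - Y)) \<in> borel_measurable M"
    using wm Km idm by measurable
  have intV: "integrable M (\<lambda>X. (w X * gauss_kernel e X Y / e) *\<^sub>R (X - Y))"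
  proof (rule Bochner_Integration.integrable_bound[OF integrable_const[of "B / e * (R + norm Y)"] vm])
    show "AE X in M. norm ((w X * gauss_kernel e X Y / e) *\<^sub>R (X - Y)) \<le> norm (B / e * (R + norm Y))"
      using Bb Rb proof eventually_elim
      case (elim X)
      have nXY: "norm (X - Y) \<le> R + norm Y" using norm_triangle_ineq4[of X Y] elim by linarith
      have "\<bar>w X\<bar> * gauss_kernel e X Y \<le> B * 1"
        using elim gauss_kernel_pos[of e X Y] gauss_kernel_le1[OF e, of X Y]
        by (intro mult_mono) auto
      hence "\<bar>w X\<bar> * gauss_kernel e X Y / e * norm (X - Y) \<le> B / e * (R + norm Y)"
        using e nXY B0 by (intro mult_mono divide_right_mono) auto
      thus ?case using gauss_kernel_pos[of e X Y] e B0 R0 by (simp add: abs_mult)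
    qed
  qed
  define c1 where "c1 = (2 * (R + norm Y) + 1) / (2 * e)"
  define C0 where "C0 = (c1\<^sup>2 + 1 / (2 * e))"
  define d where "d = min 1 (1 / (c1 + 1))"
  have c1p: "0 \<le> c1" unfolding c1_def using e R0 by simp
  have dpos: "0 < d" unfolding d_def using c1p by simp
  define m where "m = measure M (space M)"
  have m0: "0 \<le> m" unfolding m_def by simp
  have est: "norm ((\<integral>X. w X * gauss_kernel e X (Y + h) \<partial>M) - (\<integral>X. w X * gauss_kernel e X Y \<partial>M)
            - (\<integral>X. (w X * gauss_kernel e X Y / e) *\<^sub>R (X - Y) \<partial>M) \<bullet> h) \<le> m * (B * C0 * (norm h)\<^sup>2)"
    if h: "norm h < d" for h
  proof -
    have h1: "norm h \<le> 1" using h unfolding d_def by simp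
    have h2: "norm h * c1 \<le> 1"
    proof -
      have "norm h * c1 \<le> (1 / (c1 + 1)) * c1" using h c1p unfolding d_def by (intro mult_right_mono) auto
      also have "\<dots> \<le> 1" using c1p by (simp add: field_simps)
      finally show ?thesis .
    qed
    have "(\<integral>X. (w X * gauss_kernel e X Y / e) *\<^sub>R (X - Y) \<partial>M) \<bullet> h
          = (\<integral>X. ((w X * gauss_kernel e X Y / e) *\<^sub>R (X - Y)) \<bullet> h \<partial>M)"
      by (rule integral_inner_left[symmetric]) (rule intV)
    also have "\<dots> = (\<integral>X. w X * gauss_kernel e X Y * ((X - Y) \<bullet> h) / e \<partial>M)"
      by (rule Bochner_Integration.integral_cong) auto
    finally have Dh: "(\<integral>X. (w X * gauss_kernel e X Y / e) *\<^sub>R (X - Y) \<partial>M) \<bullet> h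
          = (\<integral>X. w X * gauss_kernel e X Y * ((X - Y) \<bullet> h) / e \<partial>M)" .
    have intD: "integrable M (\<lambda>X. w X * gauss_kernel e X Y * ((X - Y) \<bullet> h) / e)"
    proof -
      have "integrable M (\<lambda>X. ((w X * gauss_kernel e X Y / e) *\<^sub>R (X - Y)) \<bullet> h)"
        using intV by (rule integrable_inner_left)
      thus ?thesis by simp
    qed
    define F where "F X = w X * (gauss_kernel e X (Y + h) - gauss_kernel e X Y - gauss_kernel e X Y * ((X - Y) \<bullet> h) / e)" for X
    have intF: "integrable M F" unfolding F_def right_diff_distrib
      using intK[of "Y + h"] intK[of Y] intD by (intro Bochner_Integration.integrable_diff) (auto simp: mult.assoc)
    have eqF: "(\<integral>X. w X * gauss_kernel e X (Y + h) \<partial>M) - (\<integral>X. w X * gauss_kernel e X Y \<partial>M)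
            - (\<integral>X. (w X * gauss_kernel e X Y / e) *\<^sub>R (X - Y) \<partial>M) \<bullet> h = (\<integral>X. F X \<partial>M)"
      unfolding Dh F_def right_diff_distrib
      using intK[of "Y + h"] intK[of Y] intD
      by (subst Bochner_Integration.integral_diff, (auto simp: mult.assoc)[2])+ (simp add: mult.assoc)
    have "norm (\<integral>X. F X \<partial>M) \<le> (\<integral>X. norm (F X) \<partial>M)" by (rule integral_norm_bound)
    also have "\<dots> \<le> (\<integral>X. B * C0 * (norm h)\<^sup>2 \<partial>M)"
    proof (rule integral_mono_AE)
      show "integrable M (\<lambda>X. norm (F X))" using intF by simp
      show "integrable M (\<lambda>X. B * C0 * (norm h)\<^sup>2)" by simp
      show "AE X in M. norm (F X) \<le> B * C0 * (norm h)\<^sup>2"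
        using Bb Rb proof eventually_elim
        case (elim X)
        have q: "\<bar>gauss_kernel e X (Y + h) - gauss_kernel e X Y - gauss_kernel e X Y * ((X - Y) \<bullet> h) / e\<bar>
           \<le> C0 * (norm h)\<^sup>2"
          using gauss_kernel_quad[OF e elim(2) R0 h1] h2 unfolding C0_def c1_def by (simp add: mult.commute)
        show ?case unfolding F_def real_norm_def abs_mult
          by (rule order_trans[OF mult_mono[OF elim(1) q]]) (auto simp: mult.assoc B0)
      qed
    qed
    also have "\<dots> = m * (B * C0 * (norm h)\<^sup>2)" unfolding m_def by simp
    finally show ?thesis using eqF by simp
  qed
  show ?thesis unfolding has_derivative_at
  proof
    show "bounded_linear (\<lambda>v. (\<integral>X. (w X * gauss_kernel e X Y / e) *\<^sub>R (X - Y) \<partial>M) \<bullet> v)"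
      by (rule bounded_linear_inner_right)
    show "(\<lambda>h. norm ((\<integral>X. w X * gauss_kernel e X (Y + h) \<partial>M) - (\<integral>X. w X * gauss_kernel e X Y \<partial>M)
            - (\<integral>X. (w X * gauss_kernel e X Y / e) *\<^sub>R (X - Y) \<partial>M) \<bullet> h) / norm h) \<midarrow>0\<rightarrow> 0"
    proof (rule Lim_null_comparison)
      show "\<forall>\<^sub>F h in at 0. norm (norm ((\<integral>X. w X * gauss_kernel e X (Y + h) \<partial>M) - (\<integral>X. w X * gauss_kernel e X Y \<partial>M)
            - (\<integral>X. (w X * gauss_kernel e X Y / e) *\<^sub>R (X - Y) \<partial>M) \<bullet> h) / norm h) \<le> m * (B * C0) * norm h"
      proof -
        have ev1: "\<forall>\<^sub>F h in at (0::real^2). norm h < d"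
          using dpos by (auto simp: eventually_at intro!: exI[of _ d])
        have ev2: "\<forall>\<^sub>F h in at (0::real^2). h \<noteq> 0" by (simp add: eventually_at_filter)
        show ?thesis using ev1 ev2
        proof eventually_elim
          case (elim h)
          hence hn: "h \<noteq> 0" "norm h < d" by auto
          have "norm (norm ((\<integral>X. w X * gauss_kernel e X (Y + h) \<partial>M) - (\<integral>X. w X * gauss_kernel e X Y \<partial>M)
            - (\<integral>X. (w X * gauss_kernel e X Y / e) *\<^sub>R (X - Y) \<partial>M) \<bullet> h) / norm h)
            \<le> m * (B * C0 * (norm h)\<^sup>2) / norm h"
            using est[OF hn(2)] hn by (simp add: divide_right_mono)
          also have "\<dots> = m * (B * C0) * norm h" using hn by (simp add: power2_eq_square)
          finally show ?case .
        qed
      qed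
      show "((\<lambda>h. m * (B * C0) * norm h) \<longlongrightarrow> 0) (at 0)"
        by (intro tendsto_mult_right_zero tendsto_norm_zero tendsto_ident_at)
    qed
  qed
qed

locale setting =
  fixes f g e :: real and \<Omega> :: "(real^2) set" and \<sigma> :: "(real^2) measure" and C :: "(real^2) set"
  assumes f: "f > 0" and g: "g > 0" and e: "e > 0"
    and \<Omega>open: "open \<Omega>" and \<Omega>bdd: "bounded \<Omega>" and \<Omega>ne: "\<Omega> \<noteq> {}"
    and sets\<sigma>: "sets \<sigma> = sets borel" and fin\<sigma>: "finite_measure \<sigma>"
    and Ccomp: "compact C" and Csupp: "emeasure \<sigma> (UNIV - C) = 0"
begin

abbreviation "\<mu> \<equiv> lebesgue_on \<Omega>"

definition Fint :: "(real^2 \<Rightarrow> real) \<Rightarrow> real^2 \<Rightarrow> real" where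
  "Fint \<phi> Y = (\<integral>X. exp (\<phi> X / e) * gauss_kernel e X Y \<partial>\<mu>)"
definition Psi :: "(real^2 \<Rightarrow> real) \<Rightarrow> real^2 \<Rightarrow> real" where
  "Psi \<phi> Y = - e * ln (Fint \<phi> Y)"
definition Aint :: "(real^2 \<Rightarrow> real) \<Rightarrow> real^2 \<Rightarrow> real" where
  "Aint \<psi> X = (\<integral>Y. exp (\<psi> Y / e) * gauss_kernel e X Y \<partial>\<sigma>)"
definition kk :: real where "kk = g / (e * f\<^sup>2)"
definition Tm :: "(real^2 \<Rightarrow> real) \<Rightarrow> real^2 \<Rightarrow> real" where
  "Tm \<phi> X = - e * lambert_W0 (kk * Aint (Psi \<phi>) X)"

lemma kk_pos: "kk > 0" unfolding kk_def using f g e by simp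

lemma \<Omega>lm: "\<Omega> \<in> lmeasurable" using lmeasurable_open[OF \<Omega>bdd \<Omega>open] .
lemma \<Omega>leb: "\<Omega> \<in> sets lebesgue" using \<Omega>lm by (simp add: fmeasurableD)
lemma fin\<mu>: "finite_measure \<mu>" by (rule finite_measure_lebesgue_on[OF \<Omega>lm])
lemma id\<mu>: "(\<lambda>x. x) \<in> \<mu> \<rightarrow>\<^sub>M borel"
  using continuous_imp_measurable_on_sets_lebesgue[OF continuous_on_id \<Omega>leb] by (simp add: id_def)
lemma id\<sigma>: "(\<lambda>x. x) \<in> \<sigma> \<rightarrow>\<^sub>M borel"
  using measurable_ident_sets[OF sets\<sigma>] by (simp add: id_def)
lemma space\<mu>: "space \<mu> = \<Omega>" by simp
lemma space\<sigma>: "space \<sigma> = UNIV" using sets_eq_imp_space_eq[OF sets\<sigma>] by simp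

lemma AE\<sigma>C: "AE Y in \<sigma>. Y \<in> C"
proof -
  have "open (UNIV - C)" using compact_imp_closed[OF Ccomp] by (intro open_Diff) auto
  hence "UNIV - C \<in> sets \<sigma>" using sets\<sigma> borel_open by simp
  thus ?thesis using Csupp by (intro AE_I'[of "UNIV - C"]) (auto simp: space\<sigma>)
qed

definition R\<Omega> :: real where "R\<Omega> = (SOME r. 0 \<le> r \<and> (\<forall>x\<in>\<Omega>. norm x \<le> r))"
definition RC :: real where "RC = (SOME r. 0 \<le> r \<and> (\<forall>x\<in>C. norm x \<le> r))"

lemma R\<Omega>: "0 \<le> R\<Omega>" "\<And>x. x \<in> \<Omega> \<Longrightarrow> norm x \<le> R\<Omega>"
proof -
  obtain r where "\<forall>x\<in>\<Omega>. norm x \<le> r" using \<Omega>bdd by (auto simp: bounded_iff)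
  hence "\<exists>r. 0 \<le> r \<and> (\<forall>x\<in>\<Omega>. norm x \<le> r)" by (intro exI[of _ "max r 0"]) auto
  from someI_ex[OF this] show "0 \<le> R\<Omega>" "\<And>x. x \<in> \<Omega> \<Longrightarrow> norm x \<le> R\<Omega>" unfolding R\<Omega>_def by auto
qed

lemma RC: "0 \<le> RC" "\<And>x. x \<in> C \<Longrightarrow> norm x \<le> RC"
proof -
  obtain r where "\<forall>x\<in>C. norm x \<le> r" using compact_imp_bounded[OF Ccomp] by (auto simp: bounded_iff)
  hence "\<exists>r. 0 \<le> r \<and> (\<forall>x\<in>C. norm x \<le> r)" by (intro exI[of _ "max r 0"]) auto
  from someI_ex[OF this] show "0 \<le> RC" "\<And>x. x \<in> C \<Longrightarrow> norm x \<le> RC" unfolding RC_def by auto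
qed

definition m\<Omega> :: real where "m\<Omega> = measure \<mu> \<Omega>"

lemma m\<Omega>_pos: "m\<Omega> > 0"
proof -
  obtain x where x: "x \<in> \<Omega>" using \<Omega>ne by auto
  obtain r where r: "r > 0" "ball x r \<subseteq> \<Omega>" using \<Omega>open x open_contains_ball by blast
  have "0 < measure lebesgue (ball x r)" using r by (simp add: content_ball_pos)
  also have "\<dots> \<le> measure lebesgue \<Omega>" using r \<Omega>lm by (intro measure_mono_fmeasurable) auto
  also have "measure lebesgue \<Omega> = m\<Omega>" unfolding m\<Omega>_def using \<Omega>leb by (simp add: measure_restrict_space)
  finally show ?thesis .
qed

end

context setting begin

definition good :: "real \<Rightarrow> (real^2 \<Rightarrow> real) \<Rightarrow> bool" where
  "good L \<phi> \<longleftrightarrow> \<phi> \<in> borel_measurable \<mu> \<and> (\<forall>X\<in>\<Omega>. \<bar>\<phi> X\<bar> \<le> L)"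

lemma Km\<mu>[measurable]: "(\<lambda>X. gauss_kernel e X Z) \<in> borel_measurable \<mu>"
  unfolding gauss_kernel_def by (intro measurable_compose[OF id\<mu>]) (measurable)
lemma Km\<sigma>[measurable]: "(\<lambda>X. gauss_kernel e X Z) \<in> borel_measurable \<sigma>"
  unfolding gauss_kernel_def by (intro measurable_compose[OF id\<sigma>]) (measurable)
lemma Km\<sigma>'[measurable]: "(\<lambda>X. gauss_kernel e Z X) \<in> borel_measurable \<sigma>"
  unfolding gauss_kernel_def by (intro measurable_compose[OF id\<sigma>]) (measurable)

lemma good_L0: "good L \<phi> \<Longrightarrow> 0 \<le> L"
  using \<Omega>ne unfolding good_def by (metis abs_ge_zero all_not_in_conv order_trans)

lemma exp_bound_good:
  assumes "good L \<phi>" "X \<in> \<Omega>" shows "exp (\<phi> X / e) \<le> exp (L / e)" "exp (- L / e) \<le> exp (\<phi> X / e)"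
proof -
  have "\<phi> X \<le> L" "- L \<le> \<phi> X" using assms unfolding good_def by (auto simp: abs_le_iff)
  have "\<phi> X / e \<le> L / e" using \<open>\<phi> X \<le> L\<close> e by (intro divide_right_mono) auto
  moreover have "(- L) / e \<le> \<phi> X / e" using \<open>- L \<le> \<phi> X\<close> e by (intro divide_right_mono) auto
  ultimately show "exp (\<phi> X / e) \<le> exp (L / e)" "exp (- L / e) \<le> exp (\<phi> X / e)" by auto
qed

lemma good_meas: "good L \<phi> \<Longrightarrow> \<phi> \<in> borel_measurable \<mu>" unfolding good_def by simp

lemma int_expK:
  assumes "good L \<phi>" shows "integrable \<mu> (\<lambda>X. exp (\<phi> X / e) * gauss_kernel e X Y)"
proof -
  note [measurable] = good_meas[OF assms]
  interpret finite_measure \<mu> by (rule fin\<mu>)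
  show ?thesis
  proof (rule Bochner_Integration.integrable_bound[OF integrable_const[of "exp (L / e)"]])
    show "(\<lambda>X. exp (\<phi> X / e) * gauss_kernel e X Y) \<in> borel_measurable \<mu>"
      by measurable
    show "AE X in \<mu>. norm (exp (\<phi> X / e) * gauss_kernel e X Y) \<le> norm (exp (L / e))"
    proof (rule AE_I2)
      fix X assume "X \<in> space \<mu>"
      hence "exp (\<phi> X / e) * gauss_kernel e X Y \<le> exp (L / e) * 1"
        using exp_bound_good[OF assms] gauss_kernel_le1[OF e] gauss_kernel_pos[of e X Y]
        by (intro mult_mono) auto
      thus "norm (exp (\<phi> X / e) * gauss_kernel e X Y) \<le> norm (exp (L / e))"
        using gauss_kernel_pos[of e X Y] by simp
    qed
  qed
qed

lemma Fint_deriv: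
  assumes "good L \<phi>"
  shows "(Fint \<phi> has_derivative (\<lambda>v. (\<integral>X. (exp (\<phi> X / e) * gauss_kernel e X Y / e) *\<^sub>R (X - Y) \<partial>\<mu>) \<bullet> v)) (at Y)"
  unfolding Fint_def
proof (rule gauss_param_deriv[OF fin\<mu> e _ id\<mu> _ _ R\<Omega>(1)])
  note [measurable] = good_meas[OF assms]
  show "(\<lambda>X. exp (\<phi> X / e)) \<in> borel_measurable \<mu>" by measurable
  show "AE X in \<mu>. norm X \<le> R\<Omega>" by (intro AE_I2) (auto intro: R\<Omega>)
  show "AE X in \<mu>. \<bar>exp (\<phi> X / e)\<bar> \<le> exp (L / e)"
    by (intro AE_I2) (use exp_bound_good[OF assms] in auto)
qed simp

definition lowc :: "real \<Rightarrow> real \<Rightarrow> real" where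
  "lowc L R2 = exp (- L / e) * exp (- (R\<Omega> + R2)\<^sup>2 / (2 * e)) * m\<Omega>"

lemma lowc_pos: "lowc L R2 > 0" unfolding lowc_def using m\<Omega>_pos by simp

lemma Fint_lower:
  assumes "good L \<phi>" "norm Y \<le> R2" shows "lowc L R2 \<le> Fint \<phi> Y"
proof -
  interpret finite_measure \<mu> by (rule fin\<mu>)
  have "(\<integral>X. exp (- L / e) * exp (- (R\<Omega> + R2)\<^sup>2 / (2 * e)) \<partial>\<mu>) \<le> Fint \<phi> Y"
    unfolding Fint_def
  proof (rule integral_mono[OF _ int_expK[OF assms(1)]])
    show "integrable \<mu> (\<lambda>X. exp (- L / e) * exp (- (R\<Omega> + R2)\<^sup>2 / (2 * e)))" by simp
    fix X assume "X \<in> space \<mu>"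
    hence X: "X \<in> \<Omega>" by simp
    show "exp (- L / e) * exp (- (R\<Omega> + R2)\<^sup>2 / (2 * e)) \<le> exp (\<phi> X / e) * gauss_kernel e X Y"
      using exp_bound_good(2)[OF assms(1) X] gauss_kernel_lower[OF e R\<Omega>(2)[OF X] assms(2)]
      by (intro mult_mono) auto
  qed
  thus ?thesis unfolding lowc_def m\<Omega>_def by (simp add: mult_ac)
qed

lemma Fint_pos: assumes "good L \<phi>" shows "0 < Fint \<phi> Y"
  using Fint_lower[OF assms, of Y "norm Y"] lowc_pos[of L "norm Y"] by linarith

lemma exp_Psi: assumes "good L \<phi>" shows "exp (Psi \<phi> Y / e) = 1 / Fint \<phi> Y"
proof -
  have "Psi \<phi> Y / e = - ln (Fint \<phi> Y)" unfolding Psi_def using e by simp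
  thus ?thesis using Fint_pos[OF assms] by (simp add: exp_minus inverse_eq_divide)
qed

lemma Psi_deriv:
  assumes "good L \<phi>"
  shows "(Psi \<phi> has_derivative (\<lambda>v. ((\<integral>X. (exp (\<phi> X / e) * gauss_kernel e X Y / e) *\<^sub>R (X - Y) \<partial>\<mu>) \<bullet> v)
            * inverse (Fint \<phi> Y) * (- e))) (at Y)"
proof -
  have "((\<lambda>Y. ln (Fint \<phi> Y)) has_derivative (\<lambda>v. ((\<integral>X. (exp (\<phi> X / e) * gauss_kernel e X Y / e) *\<^sub>R (X - Y) \<partial>\<mu>) \<bullet> v)
            * inverse (Fint \<phi> Y))) (at Y)"
    by (rule DERIV_compose_FDERIV[OF DERIV_ln[OF Fint_pos[OF assms]] Fint_deriv[OF assms]])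
  from has_derivative_mult_left[OF this, of "- e"] show ?thesis
    unfolding Psi_def by (simp add: mult.commute mult.left_commute)
qed

lemma Psi_cont: assumes "good L \<phi>" shows "continuous_on UNIV (Psi \<phi>)"
  by (intro continuous_at_imp_continuous_on ballI has_derivative_continuous[OF Psi_deriv[OF assms]])

lemma Fint_cont: assumes "good L \<phi>" shows "continuous_on UNIV (Fint \<phi>)"
  by (intro continuous_at_imp_continuous_on ballI has_derivative_continuous[OF Fint_deriv[OF assms]])

definition Bq :: "real \<Rightarrow> real" where "Bq L = 1 / lowc L RC"

lemma Bq_pos: "0 < Bq L" unfolding Bq_def using lowc_pos by simp

lemma invF_bound: assumes "good L \<phi>" "Y \<in> C" shows "1 / Fint \<phi> Y \<le> Bq L"
  unfolding Bq_def using Fint_lower[OF assms(1) RC(2)[OF assms(2)]] lowc_pos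
  by (simp add: frac_le)

lemma Aint_eq: assumes "good L \<phi>"
  shows "Aint (Psi \<phi>) X = (\<integral>Y. (1 / Fint \<phi> Y) * gauss_kernel e Y X \<partial>\<sigma>)"
  unfolding Aint_def exp_Psi[OF assms] by (simp add: gauss_kernel_sym)

lemma invF_meas: assumes "good L \<phi>" shows "(\<lambda>Y. 1 / Fint \<phi> Y) \<in> borel_measurable \<sigma>"
proof -
  have "(\<lambda>Y. 1 / Fint \<phi> Y) \<in> borel_measurable borel"
  proof (intro borel_measurable_continuous_onI continuous_on_divide continuous_on_const Fint_cont[OF assms] ballI)
    fix Y show "Fint \<phi> Y \<noteq> 0" using Fint_pos[OF assms, of Y] by linarith
  qed
  thus ?thesis using measurable_cong_sets[OF sets\<sigma>[symmetric] refl] by blast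
qed

lemma Aint_deriv:
  assumes "good L \<phi>"
  shows "(Aint (Psi \<phi>) has_derivative (\<lambda>v. (\<integral>Y. ((1 / Fint \<phi> Y) * gauss_kernel e Y X / e) *\<^sub>R (Y - X) \<partial>\<sigma>) \<bullet> v)) (at X)"
proof -
  have *: "Aint (Psi \<phi>) = (\<lambda>X. \<integral>Y. (1 / Fint \<phi> Y) * gauss_kernel e Y X \<partial>\<sigma>)"
    using Aint_eq[OF assms] by auto
  show ?thesis unfolding *
  proof (rule gauss_param_deriv[OF fin\<sigma> e invF_meas[OF assms] id\<sigma> _ _ RC(1)])
    show "AE Y in \<sigma>. norm Y \<le> RC" using AE\<sigma>C by eventually_elim (rule RC(2))
    show "AE Y in \<sigma>. \<bar>1 / Fint \<phi> Y\<bar> \<le> Bq L"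
      using AE\<sigma>C proof eventually_elim
      case (elim Y)
      have "\<bar>1 / Fint \<phi> Y\<bar> = 1 / Fint \<phi> Y" using Fint_pos[OF assms, of Y] by simp
      thus ?case using invF_bound[OF assms elim] by simp
    qed
  qed (rule less_imp_le[OF Bq_pos])
qed

lemma Aint_cont: assumes "good L \<phi>" shows "continuous_on UNIV (Aint (Psi \<phi>))"
  by (intro continuous_at_imp_continuous_on ballI has_derivative_continuous[OF Aint_deriv[OF assms]])

definition sT :: real where "sT = measure \<sigma> (space \<sigma>)"

lemma int_invFK: assumes "good L \<phi>" shows "integrable \<sigma> (\<lambda>Y. (1 / Fint \<phi> Y) * gauss_kernel e Y X)"
proof -
  interpret finite_measure \<sigma> by (rule fin\<sigma>)
  show ?thesis
  proof (rule Bochner_Integration.integrable_bound[OF integrable_const[of "Bq L"]])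
    show "(\<lambda>Y. (1 / Fint \<phi> Y) * gauss_kernel e Y X) \<in> borel_measurable \<sigma>"
      using invF_meas[OF assms] by measurable
    show "AE Y in \<sigma>. norm ((1 / Fint \<phi> Y) * gauss_kernel e Y X) \<le> norm (Bq L)"
      using AE\<sigma>C proof eventually_elim
      case (elim Y)
      have Fp: "0 < Fint \<phi> Y" by (rule Fint_pos[OF assms])
      have "(1 / Fint \<phi> Y) * gauss_kernel e Y X \<le> Bq L * 1"
        by (rule mult_mono[OF invF_bound[OF assms elim] gauss_kernel_le1[OF e] less_imp_le[OF Bq_pos]])
           (use Fp gauss_kernel_pos[of e Y X] in simp)
      moreover have "0 \<le> (1 / Fint \<phi> Y) * gauss_kernel e Y X" using Fp gauss_kernel_pos[of e Y X] by simp
      ultimately show ?case using Bq_pos[of L] by simp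
    qed
  qed
qed


lemma Aint_bounds: assumes "good L \<phi>" shows "0 \<le> Aint (Psi \<phi>) X" "Aint (Psi \<phi>) X \<le> sT * Bq L"
proof -
  interpret finite_measure \<sigma> by (rule fin\<sigma>)
  show "0 \<le> Aint (Psi \<phi>) X" unfolding Aint_eq[OF assms]
  proof (rule Bochner_Integration.integral_nonneg)
    fix Y show "0 \<le> 1 / Fint \<phi> Y * gauss_kernel e Y X"
      using Fint_pos[OF assms, of Y] gauss_kernel_pos[of e Y X] by simp
  qed
  have "Aint (Psi \<phi>) X \<le> (\<integral>Y. Bq L \<partial>\<sigma>)" unfolding Aint_eq[OF assms]
  proof (rule integral_mono_AE[OF int_invFK[OF assms]])
    show "integrable \<sigma> (\<lambda>Y. Bq L)" by simp
    show "AE Y in \<sigma>. 1 / Fint \<phi> Y * gauss_kernel e Y X \<le> Bq L"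
      using AE\<sigma>C proof eventually_elim
      case (elim Y)
      have Fp: "0 < Fint \<phi> Y" by (rule Fint_pos[OF assms])
      have "(1 / Fint \<phi> Y) * gauss_kernel e Y X \<le> Bq L * 1"
        by (rule mult_mono[OF invF_bound[OF assms elim] gauss_kernel_le1[OF e] less_imp_le[OF Bq_pos]])
           (use Fp gauss_kernel_pos[of e Y X] in simp)
      thus ?case by simp
    qed
  qed
  thus "Aint (Psi \<phi>) X \<le> sT * Bq L" unfolding sT_def by simp
qed

end

lemma lambert_W0_cont: "continuous_on {0..} lambert_W0"
proof (rule lipschitz_on_continuous_on)
  show "1-lipschitz_on {0..} lambert_W0"
    by (rule lipschitz_onI) (use lambert_W0_lip in \<open>auto simp: dist_real_def\<close>)
qed

context setting begin

lemma Tm_cont: assumes "good L \<phi>" shows "continuous_on UNIV (Tm \<phi>)"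
proof -
  have c1: "continuous_on UNIV (\<lambda>X. kk * Aint (Psi \<phi>) X)"
    by (intro continuous_intros Aint_cont[OF assms])
  have "continuous_on UNIV (\<lambda>X. lambert_W0 (kk * Aint (Psi \<phi>) X))"
    by (rule continuous_on_compose2[OF lambert_W0_cont c1])
       (use Aint_bounds(1)[OF assms] kk_pos in auto)
  hence "continuous_on UNIV (\<lambda>X. - e * lambert_W0 (kk * Aint (Psi \<phi>) X))"
    by (intro continuous_intros)
  thus ?thesis unfolding Tm_def[abs_def] .
qed

lemma Tm_bounds: assumes "good L \<phi>"
  shows "- e * lambert_W0 (kk * (sT * Bq L)) \<le> Tm \<phi> X" "Tm \<phi> X \<le> 0"
proof -
  have a0: "0 \<le> kk * Aint (Psi \<phi>) X" using Aint_bounds(1)[OF assms] kk_pos by simp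
  have "kk * Aint (Psi \<phi>) X \<le> kk * (sT * Bq L)"
    using Aint_bounds(2)[OF assms] kk_pos by (intro mult_left_mono) auto
  hence "lambert_W0 (kk * Aint (Psi \<phi>) X) \<le> lambert_W0 (kk * (sT * Bq L))"
    by (rule lambert_W0_mono[OF a0])
  thus "- e * lambert_W0 (kk * (sT * Bq L)) \<le> Tm \<phi> X" unfolding Tm_def using e by simp
  show "Tm \<phi> X \<le> 0" unfolding Tm_def using e lambert_W0(1)[OF a0] by simp
qed

definition c2 :: real where "c2 = exp ((R\<Omega> + RC)\<^sup>2 / (2 * e)) / m\<Omega>"
definition MM :: real where "MM = e * kk * sT * c2"

lemma sT_nonneg: "0 \<le> sT" unfolding sT_def by simp
lemma c2_pos: "0 < c2" unfolding c2_def using m\<Omega>_pos by simp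
lemma MM_nonneg: "0 \<le> MM" unfolding MM_def using e kk_pos sT_nonneg c2_pos by simp

lemma Bq_eq: "Bq L = exp (L / e) * c2"
  unfolding Bq_def lowc_def c2_def by (simp add: exp_minus field_simps)

lemma W0_MM: "lambert_W0 (kk * (sT * Bq MM)) \<le> MM / e"
proof (rule lambert_W0_le)
  show "0 \<le> kk * (sT * Bq MM)" using kk_pos sT_nonneg Bq_pos[of MM] by simp
  show "0 \<le> MM / e" using MM_nonneg e by simp
  show "kk * (sT * Bq MM) \<le> MM / e * exp (MM / e)"
    unfolding Bq_eq using e unfolding MM_def by (simp add: field_simps)
qed

lemma Tm_bounds_MM: assumes "good MM \<phi>" shows "- MM \<le> Tm \<phi> X" "Tm \<phi> X \<le> 0"
proof -
  have "e * lambert_W0 (kk * (sT * Bq MM)) \<le> e * (MM / e)" using W0_MM e by (intro mult_left_mono) auto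
  thus "- MM \<le> Tm \<phi> X" using Tm_bounds(1)[OF assms, of X] e by simp
  show "Tm \<phi> X \<le> 0" by (rule Tm_bounds(2)[OF assms])
qed

definition qq :: real where "qq = (MM / e) / (1 + MM / e)"
lemma qq: "0 \<le> qq" "qq < 1"
proof -
  define t where "t = MM / e"
  have t: "0 \<le> t" using MM_nonneg e unfolding t_def by simp
  show "0 \<le> qq" "qq < 1" unfolding qq_def t_def[symmetric] using t by auto
qed

lemma Tm_contr_half:
  assumes g1: "good MM \<phi>1" and g2: "good MM \<phi>2" and d: "\<forall>X\<in>\<Omega>. \<bar>\<phi>1 X - \<phi>2 X\<bar> \<le> d"
  shows "Tm \<phi>1 X - Tm \<phi>2 X \<le> qq * d"
proof -
  have d0: "0 \<le> d" using d \<Omega>ne by (metis abs_ge_zero ex_in_conv order_trans)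
  have F: "Fint \<phi>1 Y \<le> exp (d / e) * Fint \<phi>2 Y" for Y
  proof -
    have "Fint \<phi>1 Y \<le> (\<integral>X. exp (d / e) * (exp (\<phi>2 X / e) * gauss_kernel e X Y) \<partial>\<mu>)"
      unfolding Fint_def
    proof (rule integral_mono[OF int_expK[OF g1]])
      show "integrable \<mu> (\<lambda>X. exp (d / e) * (exp (\<phi>2 X / e) * gauss_kernel e X Y))"
        using int_expK[OF g2] by simp
      fix X assume "X \<in> space \<mu>"
      hence "\<phi>1 X \<le> d + \<phi>2 X" using d by (auto simp: abs_le_iff)
      hence "\<phi>1 X / e \<le> d / e + \<phi>2 X / e" using e by (simp add: add_divide_distrib[symmetric] divide_right_mono)
      hence "exp (\<phi>1 X / e) \<le> exp (d / e) * exp (\<phi>2 X / e)" by (simp add: exp_add[symmetric])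
      thus "exp (\<phi>1 X / e) * gauss_kernel e X Y \<le> exp (d / e) * (exp (\<phi>2 X / e) * gauss_kernel e X Y)"
        using gauss_kernel_pos[of e X Y] by (simp add: mult.assoc[symmetric])
    qed
    thus ?thesis unfolding Fint_def by simp
  qed
  have iF: "1 / Fint \<phi>2 Y \<le> exp (d / e) * (1 / Fint \<phi>1 Y)" for Y
  proof -
    have p1: "0 < Fint \<phi>1 Y" and p2: "0 < Fint \<phi>2 Y" using Fint_pos g1 g2 by auto
    show ?thesis using F[of Y] p1 p2 by (simp add: field_simps)
  qed
  have A: "Aint (Psi \<phi>2) X \<le> exp (d / e) * Aint (Psi \<phi>1) X"
  proof -
    have "Aint (Psi \<phi>2) X \<le> (\<integral>Y. exp (d / e) * (1 / Fint \<phi>1 Y * gauss_kernel e Y X) \<partial>\<sigma>)"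
      unfolding Aint_eq[OF g2]
    proof (rule integral_mono[OF int_invFK[OF g2]])
      show "integrable \<sigma> (\<lambda>Y. exp (d / e) * (1 / Fint \<phi>1 Y * gauss_kernel e Y X))"
        using integrable_mult_right[OF int_invFK[OF g1, of X], of "exp (d / e)"] .
      fix Y
      show "1 / Fint \<phi>2 Y * gauss_kernel e Y X \<le> exp (d / e) * (1 / Fint \<phi>1 Y * gauss_kernel e Y X)"
      proof -
        have "1 / Fint \<phi>2 Y * gauss_kernel e Y X \<le> (exp (d / e) * (1 / Fint \<phi>1 Y)) * gauss_kernel e Y X"
          by (rule mult_right_mono[OF iF]) (use gauss_kernel_pos[of e Y X] in simp)
        thus ?thesis by (simp only: mult.assoc)
      qed
    qed
    also have "\<dots> = exp (d / e) * (\<integral>Y. 1 / Fint \<phi>1 Y * gauss_kernel e Y X \<partial>\<sigma>)"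
      by (rule integral_mult_right_zero)
    finally show ?thesis unfolding Aint_eq[OF g1] .
  qed
  have y1: "0 \<le> kk * Aint (Psi \<phi>2) X" using Aint_bounds(1)[OF g2] kk_pos by simp
  have y2: "0 \<le> kk * Aint (Psi \<phi>1) X" using Aint_bounds(1)[OF g1] kk_pos by simp
  have le: "kk * Aint (Psi \<phi>2) X \<le> exp (d / e) * (kk * Aint (Psi \<phi>1) X)"
    using A kk_pos by (simp add: mult.left_commute)
  have wb: "lambert_W0 (kk * Aint (Psi \<phi>2) X) \<le> MM / e"
  proof -
    have "kk * Aint (Psi \<phi>2) X \<le> kk * (sT * Bq MM)"
      using Aint_bounds(2)[OF g2] kk_pos by (intro mult_left_mono) auto
    from lambert_W0_mono[OF y1 this] W0_MM show ?thesis by linarith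
  qed
  have "lambert_W0 (kk * Aint (Psi \<phi>2) X) - lambert_W0 (kk * Aint (Psi \<phi>1) X) \<le> d / e * qq"
    unfolding qq_def by (rule lambert_W0_contr[OF y1 y2 le _ wb]) (use d0 e in simp)
  hence "e * (lambert_W0 (kk * Aint (Psi \<phi>2) X) - lambert_W0 (kk * Aint (Psi \<phi>1) X)) \<le> e * (d / e * qq)"
    using e by (intro mult_left_mono) auto
  thus ?thesis unfolding Tm_def using e by (simp add: algebra_simps)
qed

lemma Tm_contr:
  assumes g1: "good MM \<phi>1" and g2: "good MM \<phi>2" and d: "\<forall>X\<in>\<Omega>. \<bar>\<phi>1 X - \<phi>2 X\<bar> \<le> d"
  shows "\<bar>Tm \<phi>1 X - Tm \<phi>2 X\<bar> \<le> qq * d"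
proof -
  have d': "\<forall>X\<in>\<Omega>. \<bar>\<phi>2 X - \<phi>1 X\<bar> \<le> d" using d by (simp add: abs_minus_commute)
  show ?thesis using Tm_contr_half[OF g1 g2 d, of X] Tm_contr_half[OF g2 g1 d', of X] by linarith
qed

end

context setting begin

definition SS :: "((real^2) \<Rightarrow>\<^sub>C real) set" where "SS = PiC UNIV (\<lambda>_. {-MM..0})"
definition Phi :: "((real^2) \<Rightarrow>\<^sub>C real) \<Rightarrow> ((real^2) \<Rightarrow>\<^sub>C real)" where
  "Phi p = Bcontfun (Tm (apply_bcontfun p))"

lemma SS_iff: "p \<in> SS \<longleftrightarrow> (\<forall>X. - MM \<le> apply_bcontfun p X \<and> apply_bcontfun p X \<le> 0)"
  unfolding SS_def mem_PiC_iff by (auto simp: Pi_iff)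

lemma good_SS: assumes "p \<in> SS" shows "good MM (apply_bcontfun p)"
  unfolding good_def
proof
  show "apply_bcontfun p \<in> borel_measurable \<mu>"
    by (rule continuous_imp_measurable_on_sets_lebesgue[OF _ \<Omega>leb]) (rule continuous_on_apply_bcontfun)
  show "\<forall>X\<in>\<Omega>. \<bar>apply_bcontfun p X\<bar> \<le> MM" 
  proof
    fix X assume "X \<in> \<Omega>"
    have "- MM \<le> apply_bcontfun p X" "apply_bcontfun p X \<le> 0" using assms unfolding SS_iff by auto
    thus "\<bar>apply_bcontfun p X\<bar> \<le> MM" using MM_nonneg unfolding abs_le_iff by linarith
  qed
qed

lemma Tm_bcontfun: assumes "p \<in> SS" shows "Tm (apply_bcontfun p) \<in> bcontfun"
proof (rule bcontfun_normI[OF Tm_cont[OF good_SS[OF assms]]])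
  fix X show "norm (Tm (apply_bcontfun p) X) \<le> MM"
    using Tm_bounds_MM[OF good_SS[OF assms], of X] by simp
qed

lemma Phi_apply: assumes "p \<in> SS" shows "apply_bcontfun (Phi p) = Tm (apply_bcontfun p)"
  unfolding Phi_def using Tm_bcontfun[OF assms] by (simp add: Bcontfun_inverse)

lemma fixpoint_ex: "\<exists>p\<in>SS. Phi p = p"
proof -
  have "\<exists>!p\<in>SS. Phi p = p"
  proof (rule Banach_fix)
    show "complete SS" unfolding complete_eq_closed SS_def by (rule closed_PiC) auto
    show "SS \<noteq> {}"
    proof -
      have "const_bcontfun 0 \<in> SS" unfolding SS_iff using MM_nonneg by (simp add: const_bcontfun.rep_eq)
      thus ?thesis by auto
    qed
    show "0 \<le> qq" "qq < 1" by (rule qq)+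
    show "Phi ` SS \<subseteq> SS"
    proof
      fix q assume "q \<in> Phi ` SS"
      then obtain p where p: "p \<in> SS" "q = Phi p" by auto
      show "q \<in> SS" unfolding SS_iff p(2) Phi_apply[OF p(1)] using Tm_bounds_MM[OF good_SS[OF p(1)]] by auto
    qed
    fix p q assume p: "p \<in> SS" and q: "q \<in> SS"
    show "dist (Phi p) (Phi q) \<le> qq * dist p q"
    proof (rule dist_bound)
      fix X
      have d: "\<forall>Z\<in>\<Omega>. \<bar>apply_bcontfun p Z - apply_bcontfun q Z\<bar> \<le> dist p q"
        using dist_bounded[of p _ q] by (auto simp: dist_real_def)
      show "dist (apply_bcontfun (Phi p) X) (apply_bcontfun (Phi q) X) \<le> qq * dist p q"
        unfolding Phi_apply[OF p] Phi_apply[OF q] dist_real_def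
        by (rule Tm_contr[OF good_SS[OF p] good_SS[OF q] d])
    qed
  qed
  thus ?thesis by blast
qed

definition p0 where "p0 = (SOME p. p \<in> SS \<and> Phi p = p)"
definition \<phi>0 :: "real^2 \<Rightarrow> real" where "\<phi>0 = apply_bcontfun p0"
definition \<psi>0 :: "real^2 \<Rightarrow> real" where "\<psi>0 = Psi \<phi>0"

lemma p0: "p0 \<in> SS" "Phi p0 = p0"
  using someI_ex[of "\<lambda>p. p \<in> SS \<and> Phi p = p"] fixpoint_ex unfolding p0_def by auto

lemma good0: "good MM \<phi>0" unfolding \<phi>0_def by (rule good_SS[OF p0(1)])
lemma \<phi>0_cont: "continuous_on UNIV \<phi>0" unfolding \<phi>0_def by simp
lemma \<phi>0_bounds: "- MM \<le> \<phi>0 X" "\<phi>0 X \<le> 0" using p0(1) unfolding SS_iff \<phi>0_def by auto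
lemma \<phi>0_fix: "\<phi>0 X = Tm \<phi>0 X"
  using Phi_apply[OF p0(1)] p0(2) unfolding \<phi>0_def by metis

end

context setting begin

abbreviation "PP \<equiv> \<mu> \<Otimes>\<^sub>M \<sigma>"

definition EE :: "real^2 \<Rightarrow> real^2 \<Rightarrow> real" where
  "EE X Y = exp ((\<phi>0 X + \<psi>0 Y) / e) * gauss_kernel e X Y"
definition h0 :: "real^2 \<Rightarrow> real" where "h0 X = - (f\<^sup>2 / g) * \<phi>0 X"

lemma pairSF: "pair_sigma_finite \<mu> \<sigma>"
  unfolding pair_sigma_finite_def using fin\<mu> fin\<sigma> by (simp add: finite_measure_def)
lemma finPP: "finite_measure PP" by (rule finite_measure_pair_measure[OF fin\<sigma> fin\<mu>])

lemma \<phi>0_meas[measurable]: "\<phi>0 \<in> borel_measurable \<mu>" using good0 by (rule good_meas)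
lemma \<psi>0_cont: "continuous_on UNIV \<psi>0" unfolding \<psi>0_def by (rule Psi_cont[OF good0])
lemma \<psi>0_meas[measurable]: "\<psi>0 \<in> borel_measurable \<sigma>"
proof -
  have "\<psi>0 \<in> borel_measurable borel" using \<psi>0_cont by (rule borel_measurable_continuous_onI)
  thus ?thesis using measurable_cong_sets[OF sets\<sigma>[symmetric] refl] by blast
qed

lemma fstP[measurable]: "(\<lambda>z. fst z) \<in> PP \<rightarrow>\<^sub>M borel"
  by (rule measurable_compose[OF measurable_fst id\<mu>])
lemma sndP[measurable]: "(\<lambda>z. snd z) \<in> PP \<rightarrow>\<^sub>M borel"
  by (rule measurable_compose[OF measurable_snd id\<sigma>])

lemma KP[measurable]: "(\<lambda>z. gauss_kernel e (fst z) (snd z)) \<in> borel_measurable PP"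
  unfolding gauss_kernel_def by measurable

lemma EE_meas[measurable]: "(\<lambda>z. EE (fst z) (snd z)) \<in> borel_measurable PP"
  unfolding EE_def by measurable

lemma EE_split: "EE X Y = exp (\<phi>0 X / e) * (exp (\<psi>0 Y / e) * gauss_kernel e X Y)"
  unfolding EE_def by (simp add: add_divide_distrib exp_add)
lemma EE_split2: "EE X Y = exp (\<psi>0 Y / e) * (exp (\<phi>0 X / e) * gauss_kernel e X Y)"
  unfolding EE_def by (simp add: add_divide_distrib exp_add)

lemma EE_pos: "0 < EE X Y" unfolding EE_def by (simp add: gauss_kernel_pos)

lemma EE_bound: assumes "Y \<in> C" shows "EE X Y \<le> Bq MM"
proof -
  have a: "exp (\<phi>0 X / e) \<le> 1" using \<phi>0_bounds(2)[of X] e by (simp add: divide_nonpos_pos)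
  have b: "exp (\<psi>0 Y / e) \<le> Bq MM" unfolding \<psi>0_def exp_Psi[OF good0] by (rule invF_bound[OF good0 assms])
  have "EE X Y \<le> 1 * (Bq MM * 1)" unfolding EE_split
    by (intro mult_mono a b gauss_kernel_le1[OF e])
       (auto simp: less_imp_le[OF gauss_kernel_pos] less_imp_le[OF Bq_pos])
  thus ?thesis by simp
qed

lemma I1: "(\<integral>X. EE X Y \<partial>\<mu>) = 1"
proof -
  have "(\<integral>X. EE X Y \<partial>\<mu>) = exp (\<psi>0 Y / e) * Fint \<phi>0 Y"
    unfolding EE_split2 Fint_def by (rule integral_mult_right_zero)
  also have "\<dots> = 1" unfolding \<psi>0_def exp_Psi[OF good0] using Fint_pos[OF good0, of Y] by simp
  finally show ?thesis .
qed

lemma I2: "(\<integral>Y. EE X Y \<partial>\<sigma>) = h0 X"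
proof -
  have "(\<integral>Y. EE X Y \<partial>\<sigma>) = exp (\<phi>0 X / e) * Aint \<psi>0 X"
    unfolding EE_split Aint_def by (rule integral_mult_right_zero)
  also have "\<dots> = h0 X"
  proof -
    define A where "A = Aint \<psi>0 X"
    define w where "w = lambert_W0 (kk * A)"
    have A0: "0 \<le> kk * A" unfolding A_def \<psi>0_def using Aint_bounds(1)[OF good0] kk_pos by simp
    have w: "0 \<le> w" "w * exp w = kk * A" using lambert_W0[OF A0] unfolding w_def by auto
    have phi: "\<phi>0 X = - e * w" using \<phi>0_fix[of X] unfolding Tm_def w_def A_def \<psi>0_def .
    have "exp (\<phi>0 X / e) * A = exp (- w) * A" using phi e by simp
    also have "\<dots> = exp (- w) * (w * exp w) / kk" using w kk_pos by simp
    also have "\<dots> = w / kk" by (simp add: exp_minus field_simps)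
    also have "\<dots> = h0 X" unfolding h0_def phi kk_def using f g e by (simp add: field_simps)
    finally show ?thesis unfolding A_def .
  qed
  finally show ?thesis .
qed

lemma AE_PC: "AE z in PP. snd z \<in> C"
proof -
  interpret pair_sigma_finite \<mu> \<sigma> by (rule pairSF)
  have Cb: "C \<in> sets borel" using compact_imp_closed[OF Ccomp] by (simp add: borel_closed)
  show ?thesis
  proof (rule AE_pair_measure)
    show "{x \<in> space PP. snd x \<in> C} \<in> sets PP"
      using Cb by measurable
    show "AE x in \<mu>. AE y in \<sigma>. snd (x, y) \<in> C" using AE\<sigma>C by simp
  qed
qed

lemma int_EE: "integrable PP (\<lambda>z. EE (fst z) (snd z))"
proof -
  interpret finite_measure PP by (rule finPP)
  show ?thesis
  proof (rule Bochner_Integration.integrable_bound[OF integrable_const[of "Bq MM"] EE_meas])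
    show "AE z in PP. norm (EE (fst z) (snd z)) \<le> norm (Bq MM)"
      using AE_PC proof eventually_elim
      case (elim z)
      have "\<bar>EE (fst z) (snd z)\<bar> = EE (fst z) (snd z)" using EE_pos[of "fst z" "snd z"] by simp
      moreover have "\<bar>Bq MM\<bar> = Bq MM" using Bq_pos[of MM] by simp
      ultimately show ?case using EE_bound[OF elim] by simp
    qed
  qed
qed

end

context setting begin

lemma integrable_snd_lift:
  fixes u :: "real^2 \<Rightarrow> real"
  assumes u: "integrable \<sigma> u"
  shows "integrable PP (\<lambda>z. u (snd z))"
proof -
  interpret pair_sigma_finite \<mu> \<sigma> by (rule pairSF)
  interpret F\<mu>: finite_measure \<mu> by (rule fin\<mu>)
  have um[measurable]: "u \<in> borel_measurable \<sigma>" using u by simp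
  show ?thesis
  proof (rule integrableI_bounded)
    show "(\<lambda>z. u (snd z)) \<in> borel_measurable PP" by measurable
    have "(\<integral>\<^sup>+ z. ennreal (norm (u (snd z))) \<partial>PP) = (\<integral>\<^sup>+ x. \<integral>\<^sup>+ y. ennreal (norm (u y)) \<partial>\<sigma> \<partial>\<mu>)"
      using M2.nn_integral_fst[of "\<lambda>z. ennreal (norm (u (snd z)))" \<mu>] by simp
    also have "\<dots> = (\<integral>\<^sup>+ x. (\<integral>\<^sup>+ y. ennreal (norm (u y)) \<partial>\<sigma>) * indicator (space \<mu>) x \<partial>\<mu>)"
      by (intro nn_integral_cong) simp
    also have "\<dots> = (\<integral>\<^sup>+ y. ennreal (norm (u y)) \<partial>\<sigma>) * emeasure \<mu> (space \<mu>)"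
      by (simp add: nn_integral_cmult_indicator)
    also have "\<dots> < \<infinity>"
    proof -
      have a: "(\<integral>\<^sup>+ y. ennreal (norm (u y)) \<partial>\<sigma>) < \<infinity>" using u unfolding integrable_iff_bounded by simp
      have b: "emeasure \<mu> (space \<mu>) < \<infinity>" by (simp add: F\<mu>.emeasure_eq_measure)
      show ?thesis using a b by (simp add: ennreal_mult_less_top)
    qed
    finally show "(\<integral>\<^sup>+ z. ennreal (norm (u (snd z))) \<partial>PP) < \<infinity>" .
  qed
qed

lemma int_EE_x: "integrable \<sigma> (\<lambda>Y. EE X Y)"
proof -
  interpret finite_measure \<sigma> by (rule fin\<sigma>)
  have [measurable]: "(\<lambda>Y. EE X Y) \<in> borel_measurable \<sigma>" unfolding EE_def by measurable
  show ?thesis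
  proof (rule Bochner_Integration.integrable_bound[OF integrable_const[of "Bq MM"]])
    show "(\<lambda>Y. EE X Y) \<in> borel_measurable \<sigma>" by measurable
    show "AE Y in \<sigma>. norm (EE X Y) \<le> norm (Bq MM)"
      using AE\<sigma>C proof eventually_elim
      case (elim Y)
      have "\<bar>EE X Y\<bar> = EE X Y" using EE_pos[of X Y] by simp
      moreover have "\<bar>Bq MM\<bar> = Bq MM" using Bq_pos[of MM] by simp
      ultimately show ?case using EE_bound[OF elim] by simp
    qed
  qed
qed

lemma T_psi:
  fixes u :: "real^2 \<Rightarrow> real"
  assumes u: "integrable \<sigma> u"
  shows "integrable PP (\<lambda>z. EE (fst z) (snd z) * u (snd z))"
    and "(\<integral>z. EE (fst z) (snd z) * u (snd z) \<partial>PP) = (\<integral>Y. u Y \<partial>\<sigma>)"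
proof -
  interpret pair_sigma_finite \<mu> \<sigma> by (rule pairSF)
  have um[measurable]: "u \<in> borel_measurable \<sigma>" using u by simp
  have iu: "integrable PP (\<lambda>z. Bq MM * u (snd z))" using integrable_snd_lift[OF u] by simp
  show int: "integrable PP (\<lambda>z. EE (fst z) (snd z) * u (snd z))"
  proof (rule Bochner_Integration.integrable_bound[OF iu])
    show "(\<lambda>z. EE (fst z) (snd z) * u (snd z)) \<in> borel_measurable PP" by measurable
    show "AE z in PP. norm (EE (fst z) (snd z) * u (snd z)) \<le> norm (Bq MM * u (snd z))"
      using AE_PC proof eventually_elim
      case (elim z)
      have "\<bar>EE (fst z) (snd z)\<bar> \<le> \<bar>Bq MM\<bar>"
        using EE_pos[of "fst z" "snd z"] Bq_pos[of MM] EE_bound[OF elim] by simp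
      thus ?case by (simp add: abs_mult mult_right_mono)
    qed
  qed
  have "(\<integral>z. EE (fst z) (snd z) * u (snd z) \<partial>PP) = (\<integral>Y. \<integral>X. EE X Y * u Y \<partial>\<mu> \<partial>\<sigma>)"
    using integral_snd[of "\<lambda>X Y. EE X Y * u Y"] int by (simp add: case_prod_unfold)
  also have "\<dots> = (\<integral>Y. u Y \<partial>\<sigma>)"
  proof (rule Bochner_Integration.integral_cong[OF refl])
    fix Y
    have "(\<integral>X. EE X Y * u Y \<partial>\<mu>) = (\<integral>X. EE X Y \<partial>\<mu>) * u Y" by (rule integral_mult_left_zero)
    thus "(\<integral>X. EE X Y * u Y \<partial>\<mu>) = u Y" using I1 by simp
  qed
  finally show "(\<integral>z. EE (fst z) (snd z) * u (snd z) \<partial>PP) = (\<integral>Y. u Y \<partial>\<sigma>)" .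
qed


lemma h0_nonneg: "0 \<le> h0 X"
proof -
  have "0 \<le> f\<^sup>2 / g" using g by simp
  hence "f\<^sup>2 / g * \<phi>0 X \<le> 0" using \<phi>0_bounds(2)[of X] by (rule mult_nonneg_nonpos)
  thus ?thesis unfolding h0_def by simp
qed

lemma T_phi:
  fixes v :: "real^2 \<Rightarrow> real"
  assumes vm[measurable]: "v \<in> borel_measurable \<mu>" and iv: "integrable \<mu> (\<lambda>X. v X * h0 X)"
  shows "integrable PP (\<lambda>z. EE (fst z) (snd z) * v (fst z))"
    and "(\<integral>z. EE (fst z) (snd z) * v (fst z) \<partial>PP) = (\<integral>X. v X * h0 X \<partial>\<mu>)"
proof -
  interpret pair_sigma_finite \<mu> \<sigma> by (rule pairSF)
  show int: "integrable PP (\<lambda>z. EE (fst z) (snd z) * v (fst z))"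
  proof (rule integrableI_bounded)
    show "(\<lambda>z. EE (fst z) (snd z) * v (fst z)) \<in> borel_measurable PP" by measurable
    have "(\<integral>\<^sup>+ z. ennreal (norm (EE (fst z) (snd z) * v (fst z))) \<partial>PP)
        = (\<integral>\<^sup>+ x. \<integral>\<^sup>+ y. ennreal (norm (EE x y * v x)) \<partial>\<sigma> \<partial>\<mu>)"
      using M2.nn_integral_fst[of "\<lambda>z. ennreal (norm (EE (fst z) (snd z) * v (fst z)))" \<mu>] by simp
    also have "\<dots> = (\<integral>\<^sup>+ x. ennreal (norm (v x * h0 x)) \<partial>\<mu>)"
    proof (rule nn_integral_cong)
      fix x
      have "(\<integral>\<^sup>+ y. ennreal (norm (EE x y * v x)) \<partial>\<sigma>) = (\<integral>\<^sup>+ y. ennreal (EE x y * \<bar>v x\<bar>) \<partial>\<sigma>)"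
      proof (intro nn_integral_cong)
        fix y show "ennreal (norm (EE x y * v x)) = ennreal (EE x y * \<bar>v x\<bar>)"
          using EE_pos[of x y] by (simp add: abs_mult)
      qed
      also have "\<dots> = ennreal (\<integral>y. EE x y * \<bar>v x\<bar> \<partial>\<sigma>)"
      proof (rule nn_integral_eq_integral)
        show "integrable \<sigma> (\<lambda>y. EE x y * \<bar>v x\<bar>)" using int_EE_x[of x] by simp
        show "AE y in \<sigma>. 0 \<le> EE x y * \<bar>v x\<bar>"
        proof (rule AE_I2)
          fix y show "0 \<le> EE x y * \<bar>v x\<bar>" using EE_pos[of x y] by simp
        qed
      qed
      also have "(\<integral>y. EE x y * \<bar>v x\<bar> \<partial>\<sigma>) = (\<integral>y. EE x y \<partial>\<sigma>) * \<bar>v x\<bar>"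
        by (rule integral_mult_left_zero)
      also have "\<dots> = norm (v x * h0 x)" using I2[of x] h0_nonneg[of x] by (simp add: abs_mult)
      finally show "(\<integral>\<^sup>+ y. ennreal (norm (EE x y * v x)) \<partial>\<sigma>) = ennreal (norm (v x * h0 x))" .
    qed
    also have "\<dots> < \<infinity>" using iv unfolding integrable_iff_bounded by simp
    finally show "(\<integral>\<^sup>+ z. ennreal (norm (EE (fst z) (snd z) * v (fst z))) \<partial>PP) < \<infinity>" .
  qed
  have "(\<integral>z. EE (fst z) (snd z) * v (fst z) \<partial>PP) = (\<integral>X. \<integral>Y. EE X Y * v X \<partial>\<sigma> \<partial>\<mu>)"
    using integral_fst[of "\<lambda>X Y. EE X Y * v X"] int by (simp add: case_prod_unfold)
  also have "\<dots> = (\<integral>X. v X * h0 X \<partial>\<mu>)"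
  proof (rule Bochner_Integration.integral_cong[OF refl])
    fix X
    have "(\<integral>Y. EE X Y * v X \<partial>\<sigma>) = (\<integral>Y. EE X Y \<partial>\<sigma>) * v X" by (rule integral_mult_left_zero)
    thus "(\<integral>Y. EE X Y * v X \<partial>\<sigma>) = v X * h0 X" using I2 by simp
  qed
  finally show "(\<integral>z. EE (fst z) (snd z) * v (fst z) \<partial>PP) = (\<integral>X. v X * h0 X \<partial>\<mu>)" .
qed

end

context setting begin

definition GG :: "(real^2 \<Rightarrow> real) \<Rightarrow> (real^2 \<Rightarrow> real) \<Rightarrow> real^2 \<Rightarrow> real^2 \<Rightarrow> real" where
  "GG \<phi>' \<psi>' X Y = exp ((\<phi>' X + \<psi>' Y) / e) * gauss_kernel e X Y - EE X Y
      - EE X Y * ((\<phi>' X - \<phi>0 X) + (\<psi>' Y - \<psi>0 Y)) / e"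

lemma GG_eq: "GG \<phi>' \<psi>' X Y = EE X Y * (exp (((\<phi>' X - \<phi>0 X) + (\<psi>' Y - \<psi>0 Y)) / e) - 1
      - ((\<phi>' X - \<phi>0 X) + (\<psi>' Y - \<psi>0 Y)) / e)"
proof -
  have "exp ((\<phi>' X + \<psi>' Y) / e) = exp ((\<phi>0 X + \<psi>0 Y) / e) * exp (((\<phi>' X - \<phi>0 X) + (\<psi>' Y - \<psi>0 Y)) / e)"
    by (simp add: exp_add[symmetric] add_divide_distrib[symmetric])
  thus ?thesis unfolding GG_def EE_def by (simp add: algebra_simps)
qed

lemma GG_nonneg: "0 \<le> GG \<phi>' \<psi>' X Y"
  unfolding GG_eq using EE_pos[of X Y] exp_ge_add_one_self
  by (intro mult_nonneg_nonneg) (auto simp: less_imp_le algebra_simps)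

lemma GG_zero: assumes "GG \<phi>' \<psi>' X Y = 0" shows "(\<phi>' X - \<phi>0 X) + (\<psi>' Y - \<psi>0 Y) = 0"
proof (rule ccontr)
  define t where "t = ((\<phi>' X - \<phi>0 X) + (\<psi>' Y - \<psi>0 Y)) / e"
  assume "\<not> ?thesis"
  hence "t \<noteq> 0" unfolding t_def using e by simp
  hence "1 + t < exp t" using exp_minus_greater[of "- t"] by simp
  hence "0 < EE X Y * (exp t - 1 - t)" using EE_pos[of X Y] by simp
  thus False using assms unfolding GG_eq t_def by simp
qed

lemma int_psi0: "integrable \<sigma> \<psi>0"
proof -
  interpret finite_measure \<sigma> by (rule fin\<sigma>)
  have "compact (\<psi>0 ` C)" by (rule compact_continuous_image[OF continuous_on_subset[OF \<psi>0_cont] Ccomp]) auto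
  from compact_imp_bounded[OF this] obtain B where "\<forall>x\<in>\<psi>0 ` C. norm x \<le> B"
    unfolding bounded_iff by auto
  hence B: "\<And>Y. Y \<in> C \<Longrightarrow> norm (\<psi>0 Y) \<le> B" by auto
  show ?thesis
  proof (rule Bochner_Integration.integrable_bound[OF integrable_const[of B]])
    show "\<psi>0 \<in> borel_measurable \<sigma>" by measurable
    show "AE Y in \<sigma>. norm (\<psi>0 Y) \<le> norm B" using AE\<sigma>C by eventually_elim (use B in force)
  qed
qed

lemma h0_bound: "X \<in> \<Omega> \<Longrightarrow> \<bar>h0 X\<bar> \<le> f\<^sup>2 / g * MM"
proof -
  have "f\<^sup>2 / g * (- \<phi>0 X) \<le> f\<^sup>2 / g * MM" using \<phi>0_bounds[of X] g by (intro mult_left_mono) auto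
  moreover have "h0 X = f\<^sup>2 / g * (- \<phi>0 X)" unfolding h0_def by simp
  ultimately show ?thesis using h0_nonneg[of X] by simp
qed

lemma h0_meas[measurable]: "h0 \<in> borel_measurable \<mu>" unfolding h0_def by measurable

lemma int_bounded_\<mu>:
  fixes v :: "real^2 \<Rightarrow> real"
  assumes "v \<in> borel_measurable \<mu>" "\<And>X. X \<in> \<Omega> \<Longrightarrow> \<bar>v X\<bar> \<le> B"
  shows "integrable \<mu> v"
proof -
  interpret finite_measure \<mu> by (rule fin\<mu>)
  show ?thesis
    by (rule Bochner_Integration.integrable_bound[OF integrable_const[of B] assms(1)])
       (rule AE_I2, use assms(2) in force)
qed

lemma int_phi0h0: "integrable \<mu> (\<lambda>X. \<phi>0 X * h0 X)"
proof (rule int_bounded_\<mu>)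
  show "(\<lambda>X. \<phi>0 X * h0 X) \<in> borel_measurable \<mu>" by measurable
  fix X assume X: "X \<in> \<Omega>"
  have "\<bar>\<phi>0 X\<bar> \<le> MM" using \<phi>0_bounds[of X] by simp
  hence "\<bar>\<phi>0 X\<bar> * \<bar>h0 X\<bar> \<le> MM * (f\<^sup>2 / g * MM)"
    using h0_bound[OF X] by (intro mult_mono) auto
  thus "\<bar>\<phi>0 X * h0 X\<bar> \<le> MM * (f\<^sup>2 / g * MM)" by (simp add: abs_mult)
qed

definition V0 :: real where
  "V0 = (\<integral>Y. \<psi>0 Y \<partial>\<sigma>) + (\<integral>X. \<phi>0 X * h0 X \<partial>\<mu>)
     - e * integral\<^sup>L PP (\<lambda>(X, Y). exp ((\<phi>0 X + \<psi>0 Y) / e) * gauss_kernel e X Y - 1)"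

lemma gap:
  fixes \<phi>' \<psi>' :: "real^2 \<Rightarrow> real"
  assumes mphi[measurable]: "\<phi>' \<in> borel_measurable \<mu>" and mpsi[measurable]: "\<psi>' \<in> borel_measurable \<sigma>"
    and ipsi: "integrable \<sigma> \<psi>'" and iph: "integrable \<mu> (\<lambda>X. \<phi>' X * h0 X)"
    and iE: "integrable PP (\<lambda>(X, Y). exp ((\<phi>' X + \<psi>' Y) / e) * gauss_kernel e X Y - 1)"
  shows "integrable PP (\<lambda>z. GG \<phi>' \<psi>' (fst z) (snd z))"
    and "(\<integral>Y. \<psi>' Y \<partial>\<sigma>) + (\<integral>X. \<phi>' X * h0 X \<partial>\<mu>)
           - e * integral\<^sup>L PP (\<lambda>(X, Y). exp ((\<phi>' X + \<psi>' Y) / e) * gauss_kernel e X Y - 1)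
         = V0 - e * (\<integral>z. GG \<phi>' \<psi>' (fst z) (snd z) \<partial>PP)"
proof -
  interpret finite_measure PP by (rule finPP)
  define dpsi where "dpsi Y = \<psi>' Y - \<psi>0 Y" for Y
  define dphi where "dphi X = \<phi>' X - \<phi>0 X" for X
  define A' where "A' z = exp ((\<phi>' (fst z) + \<psi>' (snd z)) / e) * gauss_kernel e (fst z) (snd z) - 1" for z
  define A0 where "A0 z = EE (fst z) (snd z) - 1" for z
  define T1 where "T1 z = EE (fst z) (snd z) * dphi (fst z)" for z
  define T2 where "T2 z = EE (fst z) (snd z) * dpsi (snd z)" for z
  have idpsi: "integrable \<sigma> dpsi" unfolding dpsi_def using ipsi int_psi0 by simp
  have mdphi[measurable]: "dphi \<in> borel_measurable \<mu>" unfolding dphi_def by measurable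
  have idphi: "integrable \<mu> (\<lambda>X. dphi X * h0 X)" unfolding dphi_def left_diff_distrib
    using iph int_phi0h0 by simp
  note T2i = T_psi[OF idpsi] and T1i = T_phi[OF mdphi idphi]
  have iA': "integrable PP A'" using iE unfolding A'_def by (simp add: case_prod_unfold)
  have iA0: "integrable PP A0" unfolding A0_def using int_EE by simp
  have iT1: "integrable PP T1" unfolding T1_def by (rule T1i(1))
  have iT2: "integrable PP T2" unfolding T2_def by (rule T2i(1))
  have Geq: "GG \<phi>' \<psi>' (fst z) (snd z) = A' z - A0 z - T1 z / e - T2 z / e" for z
    unfolding GG_def A'_def A0_def T1_def T2_def dphi_def dpsi_def using e by (simp add: field_simps)
  have iG: "integrable PP (\<lambda>z. A' z - A0 z - T1 z / e - T2 z / e)"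
    using iA' iA0 iT1 iT2 by simp
  thus "integrable PP (\<lambda>z. GG \<phi>' \<psi>' (fst z) (snd z))" unfolding Geq .
  have intG: "(\<integral>z. GG \<phi>' \<psi>' (fst z) (snd z) \<partial>PP) = integral\<^sup>L PP A' - integral\<^sup>L PP A0
      - integral\<^sup>L PP T1 / e - integral\<^sup>L PP T2 / e"
    unfolding Geq using iA' iA0 iT1 iT2 by simp
  have vT1: "integral\<^sup>L PP T1 = (\<integral>X. \<phi>' X * h0 X \<partial>\<mu>) - (\<integral>X. \<phi>0 X * h0 X \<partial>\<mu>)"
  proof -
    have "integral\<^sup>L PP T1 = (\<integral>X. dphi X * h0 X \<partial>\<mu>)" unfolding T1_def by (rule T1i(2))
    also have "\<dots> = (\<integral>X. \<phi>' X * h0 X \<partial>\<mu>) - (\<integral>X. \<phi>0 X * h0 X \<partial>\<mu>)"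
      unfolding dphi_def left_diff_distrib using iph int_phi0h0 by simp
    finally show ?thesis .
  qed
  have vT2: "integral\<^sup>L PP T2 = (\<integral>Y. \<psi>' Y \<partial>\<sigma>) - (\<integral>Y. \<psi>0 Y \<partial>\<sigma>)"
  proof -
    have "integral\<^sup>L PP T2 = (\<integral>Y. dpsi Y \<partial>\<sigma>)" unfolding T2_def by (rule T2i(2))
    also have "\<dots> = (\<integral>Y. \<psi>' Y \<partial>\<sigma>) - (\<integral>Y. \<psi>0 Y \<partial>\<sigma>)"
      unfolding dpsi_def using ipsi int_psi0 by simp
    finally show ?thesis .
  qed
  have A'eq: "integral\<^sup>L PP (\<lambda>(X, Y). exp ((\<phi>' X + \<psi>' Y) / e) * gauss_kernel e X Y - 1) = integral\<^sup>L PP A'"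
    unfolding A'_def by (simp add: case_prod_unfold)
  have A0eq: "integral\<^sup>L PP (\<lambda>(X, Y). exp ((\<phi>0 X + \<psi>0 Y) / e) * gauss_kernel e X Y - 1) = integral\<^sup>L PP A0"
    unfolding A0_def EE_def by (simp add: case_prod_unfold)
  show "(\<integral>Y. \<psi>' Y \<partial>\<sigma>) + (\<integral>X. \<phi>' X * h0 X \<partial>\<mu>)
           - e * integral\<^sup>L PP (\<lambda>(X, Y). exp ((\<phi>' X + \<psi>' Y) / e) * gauss_kernel e X Y - 1)
         = V0 - e * (\<integral>z. GG \<phi>' \<psi>' (fst z) (snd z) \<partial>PP)"
    unfolding V0_def A'eq A0eq intG vT1 vT2 using e by (simp add: field_simps)
qed

end

context setting begin

lemma psi0_deriv:
  "(\<psi>0 has_derivative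
     (\<lambda>v. (Y - (\<integral>X. (exp ((\<phi>0 X + \<psi>0 Y) / e) * gauss_kernel e X Y) *\<^sub>R X \<partial>\<mu>)) \<bullet> v)) (at Y)"
proof -
  define F where "F = Fint \<phi>0 Y"
  define w where "w X = exp (\<phi>0 X / e) * gauss_kernel e X Y" for X
  have Fp: "0 < F" unfolding F_def by (rule Fint_pos[OF good0])
  have Fw: "F = (\<integral>X. w X \<partial>\<mu>)" unfolding F_def Fint_def w_def ..
  have iw: "integrable \<mu> w" unfolding w_def by (rule int_expK[OF good0])
  have wm[measurable]: "w \<in> borel_measurable \<mu>" using iw by simp
  have iwX: "integrable \<mu> (\<lambda>X. w X *\<^sub>R X)"
  proof -
    interpret finite_measure \<mu> by (rule fin\<mu>)
    show ?thesis
    proof (rule Bochner_Integration.integrable_bound[OF integrable_const[of "exp (MM / e) * R\<Omega>"]])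
      show "(\<lambda>X. w X *\<^sub>R X) \<in> borel_measurable \<mu>" using wm id\<mu> by measurable
      show "AE X in \<mu>. norm (w X *\<^sub>R X) \<le> norm (exp (MM / e) * R\<Omega>)"
      proof (rule AE_I2)
        fix X assume "X \<in> space \<mu>"
        hence X: "X \<in> \<Omega>" by simp
        have "exp (\<phi>0 X / e) * gauss_kernel e X Y \<le> exp (MM / e) * 1"
          using exp_bound_good(1)[OF good0 X] gauss_kernel_le1[OF e, of X Y] gauss_kernel_pos[of e X Y]
          by (intro mult_mono) auto
        hence "\<bar>w X\<bar> \<le> exp (MM / e) * 1" unfolding w_def using gauss_kernel_pos[of e X Y] by simp
        hence "\<bar>w X\<bar> * norm X \<le> exp (MM / e) * R\<Omega>" using R\<Omega>(2)[OF X] by (intro mult_mono) auto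
        thus "norm (w X *\<^sub>R X) \<le> norm (exp (MM / e) * R\<Omega>)" using R\<Omega>(1) by simp
      qed
    qed
  qed
  define I where "I = (\<integral>X. w X *\<^sub>R X \<partial>\<mu>)"
  have D1: "(\<integral>X. (exp (\<phi>0 X / e) * gauss_kernel e X Y / e) *\<^sub>R (X - Y) \<partial>\<mu>) = (1 / e) *\<^sub>R (I - F *\<^sub>R Y)"
  proof -
    have "(\<integral>X. (exp (\<phi>0 X / e) * gauss_kernel e X Y / e) *\<^sub>R (X - Y) \<partial>\<mu>)
        = (\<integral>X. (1 / e) *\<^sub>R (w X *\<^sub>R X - w X *\<^sub>R Y) \<partial>\<mu>)"
      unfolding w_def by (intro Bochner_Integration.integral_cong) (auto simp: scaleR_diff_right)
    also have "\<dots> = (1 / e) *\<^sub>R (\<integral>X. w X *\<^sub>R X - w X *\<^sub>R Y \<partial>\<mu>)" by simp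
    also have "(\<integral>X. w X *\<^sub>R X - w X *\<^sub>R Y \<partial>\<mu>) = I - (\<integral>X. w X *\<^sub>R Y \<partial>\<mu>)"
      unfolding I_def using iwX iw by (intro Bochner_Integration.integral_diff) auto
    also have "(\<integral>X. w X *\<^sub>R Y \<partial>\<mu>) = F *\<^sub>R Y" unfolding Fw using iw by (rule integral_scaleR_left)
    finally show ?thesis .
  qed
  have D2: "(\<integral>X. (exp ((\<phi>0 X + \<psi>0 Y) / e) * gauss_kernel e X Y) *\<^sub>R X \<partial>\<mu>) = (1 / F) *\<^sub>R I"
  proof -
    have "(\<integral>X. (exp ((\<phi>0 X + \<psi>0 Y) / e) * gauss_kernel e X Y) *\<^sub>R X \<partial>\<mu>)
        = (\<integral>X. exp (\<psi>0 Y / e) *\<^sub>R (w X *\<^sub>R X) \<partial>\<mu>)"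
      unfolding w_def by (intro Bochner_Integration.integral_cong) (auto simp: add_divide_distrib exp_add)
    also have "\<dots> = exp (\<psi>0 Y / e) *\<^sub>R I" unfolding I_def by (rule integral_scaleR_right)
    also have "exp (\<psi>0 Y / e) = 1 / F" unfolding \<psi>0_def F_def by (rule exp_Psi[OF good0])
    finally show ?thesis .
  qed
  have eq: "(\<lambda>v. ((\<integral>X. (exp (\<phi>0 X / e) * gauss_kernel e X Y / e) *\<^sub>R (X - Y) \<partial>\<mu>) \<bullet> v) * inverse (Fint \<phi>0 Y) * (- e))
     = (\<lambda>v. (Y - (\<integral>X. (exp ((\<phi>0 X + \<psi>0 Y) / e) * gauss_kernel e X Y) *\<^sub>R X \<partial>\<mu>)) \<bullet> v)"
  proof
    fix v
    show "((\<integral>X. (exp (\<phi>0 X / e) * gauss_kernel e X Y / e) *\<^sub>R (X - Y) \<partial>\<mu>) \<bullet> v) * inverse (Fint \<phi>0 Y) * (- e)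
        = (Y - (\<integral>X. (exp ((\<phi>0 X + \<psi>0 Y) / e) * gauss_kernel e X Y) *\<^sub>R X \<partial>\<mu>)) \<bullet> v"
      unfolding D1 D2 F_def[symmetric] using Fp e
      by (simp add: inner_diff_left field_simps)
  qed
  show ?thesis using Psi_deriv[OF good0, of Y] unfolding eq \<psi>0_def .
qed

lemma cont_ae_eq:
  fixes \<phi>1 \<phi>2 :: "real^2 \<Rightarrow> real"
  assumes c1: "continuous_on \<Omega> \<phi>1" and c2: "continuous_on \<Omega> \<phi>2" and ae: "AE X in \<mu>. \<phi>1 X = \<phi>2 X"
  shows "\<forall>X\<in>\<Omega>. \<phi>1 X = \<phi>2 X"
proof (rule ccontr)
  assume "\<not> ?thesis"
  then obtain X0 where X0: "X0 \<in> \<Omega>" "\<phi>1 X0 \<noteq> \<phi>2 X0" by auto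
  define U where "U = \<Omega> \<inter> (\<lambda>X. \<phi>1 X - \<phi>2 X) -` (- {0})"
  have "open U" unfolding U_def
    by (rule continuous_open_preimage[OF continuous_on_diff[OF c1 c2] \<Omega>open]) auto
  moreover have "X0 \<in> U" unfolding U_def using X0 by auto
  ultimately obtain r where r: "r > 0" "ball X0 r \<subseteq> U" using open_contains_ball by blast
  have UO: "U \<subseteq> \<Omega>" unfolding U_def by auto
  have Ul: "U \<in> sets lebesgue" using \<open>open U\<close> by (simp add: borel_open sets_completionI_sets)
  have Us: "U \<in> sets \<mu>" using Ul UO \<Omega>leb by (simp add: sets_restrict_space_iff)
  have "emeasure \<mu> U = 0"
  proof -
    have "{x \<in> space \<mu>. \<not> \<phi>1 x = \<phi>2 x} = U" unfolding U_def by auto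
    from AE_iff_measurable[OF Us this] ae show ?thesis by simp
  qed
  hence "emeasure lebesgue U = 0" using UO \<Omega>leb by (simp add: emeasure_restrict_space)
  moreover have "emeasure lebesgue (ball X0 r) \<le> emeasure lebesgue U"
    using r by (intro emeasure_mono) (auto simp: Ul)
  ultimately have "emeasure lebesgue (ball X0 r) = 0" by simp
  hence "measure lebesgue (ball X0 r) = 0" by (simp add: measure_def)
  moreover have "0 < measure lebesgue (ball X0 r)" using r by (simp add: content_ball_pos)
  ultimately show False by simp
qed

end

context setting begin

lemma cont_meas\<mu>: "continuous_on \<Omega> \<phi>' \<Longrightarrow> \<phi>' \<in> borel_measurable \<mu>"
  by (rule continuous_imp_measurable_on_sets_lebesgue[OF _ \<Omega>leb])

lemma cont_meas\<sigma>: assumes "continuous_on UNIV \<psi>'" shows "\<psi>' \<in> borel_measurable \<sigma>"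
proof -
  have "\<psi>' \<in> borel_measurable borel" using assms by (rule borel_measurable_continuous_onI)
  thus ?thesis using measurable_cong_sets[OF sets\<sigma>[symmetric] refl] by blast
qed

lemma int_A0: "integrable PP (\<lambda>(X, Y). exp ((\<phi>0 X + \<psi>0 Y) / e) * gauss_kernel e X Y - 1)"
proof -
  interpret finite_measure PP by (rule finPP)
  have "integrable PP (\<lambda>z. EE (fst z) (snd z) - 1)" using int_EE by simp
  thus ?thesis unfolding EE_def by (simp add: case_prod_unfold)
qed

lemma GG_int_nonneg:
  assumes "integrable PP (\<lambda>z. GG \<phi>' \<psi>' (fst z) (snd z))"
  shows "0 \<le> (\<integral>z. GG \<phi>' \<psi>' (fst z) (snd z) \<partial>PP)"
  by (rule Bochner_Integration.integral_nonneg) (rule GG_nonneg)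

lemma ot_0: "ot_obj e \<Omega> \<sigma> h0 \<phi>0 \<psi>0 = ereal V0"
  unfolding ot_obj_def V0_def using int_psi0 int_phi0h0 int_A0 by simp

lemma ot_le:
  assumes c1: "continuous_on \<Omega> \<phi>'" and c2: "continuous_on UNIV \<psi>'"
  shows "ot_obj e \<Omega> \<sigma> h0 \<phi>' \<psi>' \<le> ereal V0"
proof (cases "integrable \<sigma> \<psi>' \<and> integrable \<mu> (\<lambda>X. \<phi>' X * h0 X)
        \<and> integrable PP (\<lambda>(X, Y). exp ((\<phi>' X + \<psi>' Y) / e) * gauss_kernel e X Y - 1)")
  case True
  hence i1: "integrable \<sigma> \<psi>'" and i2: "integrable \<mu> (\<lambda>X. \<phi>' X * h0 X)"
    and i3: "integrable PP (\<lambda>(X, Y). exp ((\<phi>' X + \<psi>' Y) / e) * gauss_kernel e X Y - 1)" by auto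
  note g = gap[OF cont_meas\<mu>[OF c1] cont_meas\<sigma>[OF c2] i1 i2 i3]
  have "ot_obj e \<Omega> \<sigma> h0 \<phi>' \<psi>' = ereal ((\<integral>Y. \<psi>' Y \<partial>\<sigma>) + (\<integral>X. \<phi>' X * h0 X \<partial>\<mu>)
           - e * integral\<^sup>L PP (\<lambda>(X, Y). exp ((\<phi>' X + \<psi>' Y) / e) * gauss_kernel e X Y - 1))"
    by (simp only: ot_obj_def if_P[OF True])
  also have "\<dots> = ereal (V0 - e * (\<integral>z. GG \<phi>' \<psi>' (fst z) (snd z) \<partial>PP))" using g(2) by simp
  also have "\<dots> \<le> ereal V0"
    using GG_int_nonneg[OF g(1)] True e by simp
  finally show ?thesis .
next
  case False
  have "ot_obj e \<Omega> \<sigma> h0 \<phi>' \<psi>' = - \<infinity>" by (simp only: ot_obj_def if_not_P[OF False])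
  thus ?thesis by simp
qed

definition aa :: real where "aa = f\<^sup>2 / (2 * g)"
definition DV0 :: real where "DV0 = V0 + aa * (\<integral>X. (\<phi>0 X)\<^sup>2 \<partial>\<mu>)"

lemma aa_pos: "0 < aa" unfolding aa_def using f g by simp

lemma int_phi0sq: "integrable \<mu> (\<lambda>X. (\<phi>0 X)\<^sup>2)"
proof (rule int_bounded_\<mu>)
  show "(\<lambda>X. (\<phi>0 X)\<^sup>2) \<in> borel_measurable \<mu>" by measurable
  fix X
  have "\<bar>\<phi>0 X\<bar> \<le> MM" using \<phi>0_bounds[of X] by simp
  hence "\<bar>\<phi>0 X\<bar> * \<bar>\<phi>0 X\<bar> \<le> MM * MM" by (intro mult_mono) auto
  thus "\<bar>(\<phi>0 X)\<^sup>2\<bar> \<le> MM * MM" by (simp add: power2_eq_square abs_mult)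
qed

lemma h0_eq: "h0 X = - 2 * aa * \<phi>0 X" unfolding h0_def aa_def using g by simp

lemma int_phi0h0_eq: "(\<integral>X. \<phi>0 X * h0 X \<partial>\<mu>) = - 2 * aa * (\<integral>X. (\<phi>0 X)\<^sup>2 \<partial>\<mu>)"
proof -
  have "(\<integral>X. \<phi>0 X * h0 X \<partial>\<mu>) = (\<integral>X. (- 2 * aa) * (\<phi>0 X)\<^sup>2 \<partial>\<mu>)"
    unfolding h0_eq by (intro Bochner_Integration.integral_cong) (auto simp: power2_eq_square)
  also have "\<dots> = - 2 * aa * (\<integral>X. (\<phi>0 X)\<^sup>2 \<partial>\<mu>)" by (rule integral_mult_right_zero)
  finally show ?thesis .
qed

lemma dual_0: "dual_obj f g \<Omega> \<sigma> e \<phi>0 \<psi>0 = ereal DV0"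
proof -
  have "dual_obj f g \<Omega> \<sigma> e \<phi>0 \<psi>0 = ereal ((\<integral>Y. \<psi>0 Y \<partial>\<sigma>) - aa * (\<integral>X. (\<phi>0 X)\<^sup>2 \<partial>\<mu>)
      - e * integral\<^sup>L PP (\<lambda>(X, Y). exp ((\<phi>0 X + \<psi>0 Y) / e) * gauss_kernel e X Y - 1))"
    unfolding dual_obj_def aa_def using int_psi0 int_phi0sq int_A0 by simp
  also have "\<dots> = ereal DV0" unfolding DV0_def V0_def int_phi0h0_eq by simp
  finally show ?thesis .
qed

lemma dual_gap:
  assumes c1: "continuous_on \<Omega> \<phi>'" and c2: "continuous_on UNIV \<psi>'"
    and ipsi: "integrable \<sigma> \<psi>'" and isq: "integrable \<mu> (\<lambda>X. (\<phi>' X)\<^sup>2)"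
    and iE: "integrable PP (\<lambda>(X, Y). exp ((\<phi>' X + \<psi>' Y) / e) * gauss_kernel e X Y - 1)"
  shows "integrable PP (\<lambda>z. GG \<phi>' \<psi>' (fst z) (snd z))"
    and "integrable \<mu> (\<lambda>X. (\<phi>' X - \<phi>0 X)\<^sup>2)"
    and "(\<integral>Y. \<psi>' Y \<partial>\<sigma>) - f\<^sup>2 / (2 * g) * (\<integral>X. (\<phi>' X)\<^sup>2 \<partial>\<mu>)
          - e * integral\<^sup>L PP (\<lambda>(X, Y). exp ((\<phi>' X + \<psi>' Y) / e) * gauss_kernel e X Y - 1)
        = DV0 - e * (\<integral>z. GG \<phi>' \<psi>' (fst z) (snd z) \<partial>PP) - aa * (\<integral>X. (\<phi>' X - \<phi>0 X)\<^sup>2 \<partial>\<mu>)"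
proof -
  have m1[measurable]: "\<phi>' \<in> borel_measurable \<mu>" by (rule cont_meas\<mu>[OF c1])
  have iph: "integrable \<mu> (\<lambda>X. \<phi>' X * h0 X)"
  proof (rule Bochner_Integration.integrable_bound)
    show "integrable \<mu> (\<lambda>X. f\<^sup>2 / g * MM * (1 + (\<phi>' X)\<^sup>2))"
    proof -
      interpret finite_measure \<mu> by (rule fin\<mu>)
      show ?thesis using isq by simp
    qed
    show "(\<lambda>X. \<phi>' X * h0 X) \<in> borel_measurable \<mu>" by measurable
    show "AE X in \<mu>. norm (\<phi>' X * h0 X) \<le> norm (f\<^sup>2 / g * MM * (1 + (\<phi>' X)\<^sup>2))"
    proof (rule AE_I2)
      fix X assume "X \<in> space \<mu>"
      hence X: "X \<in> \<Omega>" by simp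
      have a: "\<bar>\<phi>' X\<bar> \<le> 1 + (\<phi>' X)\<^sup>2"
      proof (cases "\<bar>\<phi>' X\<bar> \<le> 1")
        case True thus ?thesis using zero_le_power2[of "\<phi>' X"] by linarith
      next
        case False
        hence "\<bar>\<phi>' X\<bar> * 1 \<le> \<bar>\<phi>' X\<bar> * \<bar>\<phi>' X\<bar>" by (intro mult_left_mono) auto
        thus ?thesis by (simp add: power2_eq_square abs_mult[symmetric])
      qed
      have "\<bar>\<phi>' X\<bar> * \<bar>h0 X\<bar> \<le> (1 + (\<phi>' X)\<^sup>2) * (f\<^sup>2 / g * MM)"
        using a h0_bound[OF X] by (intro mult_mono) auto
      moreover have "0 \<le> f\<^sup>2 / g * MM * (1 + (\<phi>' X)\<^sup>2)" using MM_nonneg g by simp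
      ultimately show "norm (\<phi>' X * h0 X) \<le> norm (f\<^sup>2 / g * MM * (1 + (\<phi>' X)\<^sup>2))"
        using MM_nonneg g by (simp add: abs_mult mult.commute)
    qed
  qed
  note gp = gap[OF m1 cont_meas\<sigma>[OF c2] ipsi iph iE]
  show "integrable PP (\<lambda>z. GG \<phi>' \<psi>' (fst z) (snd z))" by (rule gp(1))
  have pw: "(\<phi>' X - \<phi>0 X)\<^sup>2 = (1 / aa) * (aa * (\<phi>' X)\<^sup>2 + \<phi>' X * h0 X + aa * (\<phi>0 X)\<^sup>2)" for X
    unfolding h0_eq using aa_pos by (simp add: field_simps power2_eq_square)
  have i3: "integrable \<mu> (\<lambda>X. aa * (\<phi>' X)\<^sup>2 + \<phi>' X * h0 X + aa * (\<phi>0 X)\<^sup>2)"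
    using isq iph int_phi0sq by simp
  show "integrable \<mu> (\<lambda>X. (\<phi>' X - \<phi>0 X)\<^sup>2)" unfolding pw using i3 by simp
  have "aa * (\<integral>X. (\<phi>' X - \<phi>0 X)\<^sup>2 \<partial>\<mu>) = (\<integral>X. aa * (\<phi>' X)\<^sup>2 + \<phi>' X * h0 X + aa * (\<phi>0 X)\<^sup>2 \<partial>\<mu>)"
    unfolding pw using aa_pos by simp
  also have "\<dots> = aa * (\<integral>X. (\<phi>' X)\<^sup>2 \<partial>\<mu>) + (\<integral>X. \<phi>' X * h0 X \<partial>\<mu>) + aa * (\<integral>X. (\<phi>0 X)\<^sup>2 \<partial>\<mu>)"
    using isq iph int_phi0sq by simp
  finally have sq: "aa * (\<integral>X. (\<phi>' X - \<phi>0 X)\<^sup>2 \<partial>\<mu>) = aa * (\<integral>X. (\<phi>' X)\<^sup>2 \<partial>\<mu>) + (\<integral>X. \<phi>' X * h0 X \<partial>\<mu>) + aa * (\<integral>X. (\<phi>0 X)\<^sup>2 \<partial>\<mu>)" .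
  show "(\<integral>Y. \<psi>' Y \<partial>\<sigma>) - f\<^sup>2 / (2 * g) * (\<integral>X. (\<phi>' X)\<^sup>2 \<partial>\<mu>)
          - e * integral\<^sup>L PP (\<lambda>(X, Y). exp ((\<phi>' X + \<psi>' Y) / e) * gauss_kernel e X Y - 1)
        = DV0 - e * (\<integral>z. GG \<phi>' \<psi>' (fst z) (snd z) \<partial>PP) - aa * (\<integral>X. (\<phi>' X - \<phi>0 X)\<^sup>2 \<partial>\<mu>)"
    using gp(2) sq unfolding DV0_def aa_def[symmetric] by linarith
qed

end

context setting begin

lemma dual_le:
  assumes c1: "continuous_on \<Omega> \<phi>'" and c2: "continuous_on UNIV \<psi>'"
  shows "dual_obj f g \<Omega> \<sigma> e \<phi>' \<psi>' \<le> ereal DV0"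
proof (cases "integrable \<sigma> \<psi>' \<and> integrable \<mu> (\<lambda>X. (\<phi>' X)\<^sup>2)
        \<and> integrable PP (\<lambda>(X, Y). exp ((\<phi>' X + \<psi>' Y) / e) * gauss_kernel e X Y - 1)")
  case True
  hence i1: "integrable \<sigma> \<psi>'" and i2: "integrable \<mu> (\<lambda>X. (\<phi>' X)\<^sup>2)"
    and i3: "integrable PP (\<lambda>(X, Y). exp ((\<phi>' X + \<psi>' Y) / e) * gauss_kernel e X Y - 1)" by auto
  note dg = dual_gap[OF c1 c2 i1 i2 i3]
  have "dual_obj f g \<Omega> \<sigma> e \<phi>' \<psi>' = ereal ((\<integral>Y. \<psi>' Y \<partial>\<sigma>) - f\<^sup>2 / (2 * g) * (\<integral>X. (\<phi>' X)\<^sup>2 \<partial>\<mu>)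
          - e * integral\<^sup>L PP (\<lambda>(X, Y). exp ((\<phi>' X + \<psi>' Y) / e) * gauss_kernel e X Y - 1))"
    by (simp only: dual_obj_def if_P[OF True])
  also have "\<dots> = ereal (DV0 - e * (\<integral>z. GG \<phi>' \<psi>' (fst z) (snd z) \<partial>PP) - aa * (\<integral>X. (\<phi>' X - \<phi>0 X)\<^sup>2 \<partial>\<mu>))"
    using dg(3) by simp
  also have "\<dots> \<le> ereal DV0"
  proof -
    have "0 \<le> (\<integral>X. (\<phi>' X - \<phi>0 X)\<^sup>2 \<partial>\<mu>)" by simp
    hence "0 \<le> aa * (\<integral>X. (\<phi>' X - \<phi>0 X)\<^sup>2 \<partial>\<mu>)" using aa_pos by simp
    moreover have "0 \<le> e * (\<integral>z. GG \<phi>' \<psi>' (fst z) (snd z) \<partial>PP)"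
      using GG_int_nonneg[OF dg(1)] e by simp
    ultimately show ?thesis by simp
  qed
  finally show ?thesis .
next
  case False
  have "dual_obj f g \<Omega> \<sigma> e \<phi>' \<psi>' = - \<infinity>" by (simp only: dual_obj_def if_not_P[OF False])
  thus ?thesis by simp
qed

lemma \<phi>0_cont\<Omega>: "continuous_on \<Omega> \<phi>0" using \<phi>0_cont by (rule continuous_on_subset) simp

lemma dual_max0: "dual_maximizer f g \<Omega> \<sigma> e \<phi>0 \<psi>0"
  unfolding dual_maximizer_def using \<phi>0_cont\<Omega> \<psi>0_cont dual_le dual_0 by simp

lemma dual_unique:
  assumes dm: "dual_maximizer f g \<Omega> \<sigma> e \<phi>' \<psi>'"
  shows "(\<forall>X\<in>\<Omega>. \<phi>' X = \<phi>0 X) \<and> (AE Y in \<sigma>. \<psi>' Y = \<psi>0 Y)"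
proof -
  have c1: "continuous_on \<Omega> \<phi>'" and c2: "continuous_on UNIV \<psi>'"
    and ge: "dual_obj f g \<Omega> \<sigma> e \<phi>0 \<psi>0 \<le> dual_obj f g \<Omega> \<sigma> e \<phi>' \<psi>'"
    using dm \<phi>0_cont\<Omega> \<psi>0_cont unfolding dual_maximizer_def by auto
  have True: "integrable \<sigma> \<psi>' \<and> integrable \<mu> (\<lambda>X. (\<phi>' X)\<^sup>2)
        \<and> integrable PP (\<lambda>(X, Y). exp ((\<phi>' X + \<psi>' Y) / e) * gauss_kernel e X Y - 1)"
  proof (rule ccontr)
    assume False: "\<not> ?thesis"
    have "dual_obj f g \<Omega> \<sigma> e \<phi>' \<psi>' = - \<infinity>" by (simp only: dual_obj_def if_not_P[OF False])
    thus False using ge dual_0 by simp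
  qed
  hence i1: "integrable \<sigma> \<psi>'" and i2: "integrable \<mu> (\<lambda>X. (\<phi>' X)\<^sup>2)"
    and i3: "integrable PP (\<lambda>(X, Y). exp ((\<phi>' X + \<psi>' Y) / e) * gauss_kernel e X Y - 1)" by auto
  note dg = dual_gap[OF c1 c2 i1 i2 i3]
  have "dual_obj f g \<Omega> \<sigma> e \<phi>' \<psi>' = ereal ((\<integral>Y. \<psi>' Y \<partial>\<sigma>) - f\<^sup>2 / (2 * g) * (\<integral>X. (\<phi>' X)\<^sup>2 \<partial>\<mu>)
          - e * integral\<^sup>L PP (\<lambda>(X, Y). exp ((\<phi>' X + \<psi>' Y) / e) * gauss_kernel e X Y - 1))"
    by (simp only: dual_obj_def if_P[OF True])
  also have "\<dots> = ereal (DV0 - e * (\<integral>z. GG \<phi>' \<psi>' (fst z) (snd z) \<partial>PP) - aa * (\<integral>X. (\<phi>' X - \<phi>0 X)\<^sup>2 \<partial>\<mu>))"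
    using dg(3) by simp
  finally have "DV0 \<le> DV0 - e * (\<integral>z. GG \<phi>' \<psi>' (fst z) (snd z) \<partial>PP) - aa * (\<integral>X. (\<phi>' X - \<phi>0 X)\<^sup>2 \<partial>\<mu>)"
    using ge dual_0 by simp
  moreover have sq0: "0 \<le> (\<integral>X. (\<phi>' X - \<phi>0 X)\<^sup>2 \<partial>\<mu>)" by simp
  moreover have G0: "0 \<le> (\<integral>z. GG \<phi>' \<psi>' (fst z) (snd z) \<partial>PP)" by (rule GG_int_nonneg[OF dg(1)])
  ultimately have "e * (\<integral>z. GG \<phi>' \<psi>' (fst z) (snd z) \<partial>PP) + aa * (\<integral>X. (\<phi>' X - \<phi>0 X)\<^sup>2 \<partial>\<mu>) \<le> 0"
    by simp
  moreover have "0 \<le> e * (\<integral>z. GG \<phi>' \<psi>' (fst z) (snd z) \<partial>PP)" using G0 e by simp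
  moreover have "0 \<le> aa * (\<integral>X. (\<phi>' X - \<phi>0 X)\<^sup>2 \<partial>\<mu>)" using sq0 aa_pos by simp
  ultimately have "e * (\<integral>z. GG \<phi>' \<psi>' (fst z) (snd z) \<partial>PP) = 0" and "aa * (\<integral>X. (\<phi>' X - \<phi>0 X)\<^sup>2 \<partial>\<mu>) = 0"
    by linarith+
  hence z1: "(\<integral>z. GG \<phi>' \<psi>' (fst z) (snd z) \<partial>PP) = 0" and z2: "(\<integral>X. (\<phi>' X - \<phi>0 X)\<^sup>2 \<partial>\<mu>) = 0"
    using e aa_pos by auto
  have "AE X in \<mu>. (\<phi>' X - \<phi>0 X)\<^sup>2 = 0"
    using integral_nonneg_eq_0_iff_AE[OF dg(2)] z2 by simp
  hence "AE X in \<mu>. \<phi>' X = \<phi>0 X" by eventually_elim simp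
  hence eqphi: "\<forall>X\<in>\<Omega>. \<phi>' X = \<phi>0 X" by (rule cont_ae_eq[OF c1 \<phi>0_cont\<Omega>])
  have "AE z in PP. GG \<phi>' \<psi>' (fst z) (snd z) = 0"
    using integral_nonneg_eq_0_iff_AE[OF dg(1)] z1 GG_nonneg by simp
  moreover have fstO: "AE z in PP. fst z \<in> \<Omega>" by (rule AE_I2) (auto simp: space_pair_measure)
  ultimately have aeP: "AE z in PP. \<psi>' (snd z) = \<psi>0 (snd z)"
  proof eventually_elim
    case (elim z)
    from GG_zero[OF elim(1)] eqphi elim(2) show ?case by auto
  qed
  interpret pair_sigma_finite \<mu> \<sigma> by (rule pairSF)
  have "AE x in \<mu>. AE y in \<sigma>. \<psi>' y = \<psi>0 y" using AE_pair[OF aeP] by simp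
  hence "AE Y in \<sigma>. \<psi>' Y = \<psi>0 Y"
  proof (cases "AE Y in \<sigma>. \<psi>' Y = \<psi>0 Y")
    case False
    assume "AE x in \<mu>. AE y in \<sigma>. \<psi>' y = \<psi>0 y"
    hence "AE x in \<mu>. False" using False by simp
    hence "emeasure \<mu> (space \<mu>) = 0" using ae_filter_eq_bot_iff[of \<mu>] by (simp add: eventually_False)
    hence "m\<Omega> = 0" unfolding m\<Omega>_def by (simp add: measure_def)
    thus ?thesis using m\<Omega>_pos by simp
  qed
  with eqphi show ?thesis by simp
qed

end

context setting begin

lemma OT_eq: "entropic_OT e \<Omega> \<sigma> h0 = ereal V0"
  unfolding entropic_OT_def
proof (rule antisym)
  show "(SUP p\<in>{(\<phi>, \<psi>). continuous_on \<Omega> \<phi> \<and> continuous_on UNIV \<psi>}. ot_obj e \<Omega> \<sigma> h0 (fst p) (snd p)) \<le> ereal V0"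
    by (rule SUP_least) (auto intro: ot_le)
  have "ot_obj e \<Omega> \<sigma> h0 (fst (\<phi>0, \<psi>0)) (snd (\<phi>0, \<psi>0))
      \<le> (SUP p\<in>{(\<phi>, \<psi>). continuous_on \<Omega> \<phi> \<and> continuous_on UNIV \<psi>}. ot_obj e \<Omega> \<sigma> h0 (fst p) (snd p))"
    by (rule SUP_upper) (use \<phi>0_cont\<Omega> \<psi>0_cont in auto)
  thus "ereal V0 \<le> (SUP p\<in>{(\<phi>, \<psi>). continuous_on \<Omega> \<phi> \<and> continuous_on UNIV \<psi>}. ot_obj e \<Omega> \<sigma> h0 (fst p) (snd p))"
    using ot_0 by simp
qed

lemma int_h0sq: "integrable \<mu> (\<lambda>X. (h0 X)\<^sup>2)"
proof (rule int_bounded_\<mu>)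
  show "(\<lambda>X. (h0 X)\<^sup>2) \<in> borel_measurable \<mu>" by measurable
  fix X assume X: "X \<in> \<Omega>"
  have "\<bar>h0 X\<bar> * \<bar>h0 X\<bar> \<le> (f\<^sup>2 / g * MM) * (f\<^sup>2 / g * MM)"
    using h0_bound[OF X] by (intro mult_mono) auto
  thus "\<bar>(h0 X)\<^sup>2\<bar> \<le> (f\<^sup>2 / g * MM) * (f\<^sup>2 / g * MM)" by (simp add: power2_eq_square abs_mult)
qed

lemma nonneg_h0: "nonneg_L2 \<Omega> h0"
  unfolding nonneg_L2_def using h0_meas int_h0sq h0_nonneg by simp

lemma OT_min:
  assumes hn: "nonneg_L2 \<Omega> h'"
  shows "entropic_OT e \<Omega> \<sigma> h0 + ereal (g / (2 * f\<^sup>2) * (\<integral>X. (h0 X)\<^sup>2 \<partial>\<mu>))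
         \<le> entropic_OT e \<Omega> \<sigma> h' + ereal (g / (2 * f\<^sup>2) * (\<integral>X. (h' X)\<^sup>2 \<partial>\<mu>))"
proof -
  define c where "c = g / (2 * f\<^sup>2)"
  have c: "0 < c" unfolding c_def using f g by simp
  have hm[measurable]: "h' \<in> borel_measurable \<mu>" and hsq: "integrable \<mu> (\<lambda>X. (h' X)\<^sup>2)"
    using hn unfolding nonneg_L2_def by auto
  have iph: "integrable \<mu> (\<lambda>X. \<phi>0 X * h' X)"
  proof (rule Bochner_Integration.integrable_bound)
    show "integrable \<mu> (\<lambda>X. MM * (1 + (h' X)\<^sup>2))"
    proof -
      interpret finite_measure \<mu> by (rule fin\<mu>)
      show ?thesis using hsq by simp
    qed
    show "(\<lambda>X. \<phi>0 X * h' X) \<in> borel_measurable \<mu>" by measurable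
    show "AE X in \<mu>. norm (\<phi>0 X * h' X) \<le> norm (MM * (1 + (h' X)\<^sup>2))"
    proof (rule AE_I2)
      fix X
      have a: "\<bar>h' X\<bar> \<le> 1 + (h' X)\<^sup>2"
      proof (cases "\<bar>h' X\<bar> \<le> 1")
        case True thus ?thesis using zero_le_power2[of "h' X"] by linarith
      next
        case False
        hence "\<bar>h' X\<bar> * 1 \<le> \<bar>h' X\<bar> * \<bar>h' X\<bar>" by (intro mult_left_mono) auto
        thus ?thesis by (simp add: power2_eq_square abs_mult[symmetric])
      qed
      have b: "\<bar>\<phi>0 X\<bar> \<le> MM" using \<phi>0_bounds[of X] by simp
      have "\<bar>\<phi>0 X\<bar> * \<bar>h' X\<bar> \<le> MM * (1 + (h' X)\<^sup>2)" using a b by (intro mult_mono) auto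
      moreover have "0 \<le> MM * (1 + (h' X)\<^sup>2)" using MM_nonneg by simp
      ultimately show "norm (\<phi>0 X * h' X) \<le> norm (MM * (1 + (h' X)\<^sup>2))"
        using MM_nonneg by (simp add: abs_mult)
    qed
  qed
  have cond: "integrable \<sigma> \<psi>0 \<and> integrable \<mu> (\<lambda>X. \<phi>0 X * h' X)
      \<and> integrable PP (\<lambda>(X, Y). exp ((\<phi>0 X + \<psi>0 Y) / e) * gauss_kernel e X Y - 1)"
    using int_psi0 iph int_A0 by simp
  define W where "W = (\<integral>Y. \<psi>0 Y \<partial>\<sigma>) + (\<integral>X. \<phi>0 X * h' X \<partial>\<mu>)
      - e * integral\<^sup>L PP (\<lambda>(X, Y). exp ((\<phi>0 X + \<psi>0 Y) / e) * gauss_kernel e X Y - 1)"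
  have otW: "ot_obj e \<Omega> \<sigma> h' \<phi>0 \<psi>0 = ereal W"
    unfolding W_def by (simp only: ot_obj_def if_P[OF cond])
  have "ot_obj e \<Omega> \<sigma> h' (fst (\<phi>0, \<psi>0)) (snd (\<phi>0, \<psi>0))
      \<le> (SUP p\<in>{(\<phi>, \<psi>). continuous_on \<Omega> \<phi> \<and> continuous_on UNIV \<psi>}. ot_obj e \<Omega> \<sigma> h' (fst p) (snd p))"
    by (rule SUP_upper) (use \<phi>0_cont\<Omega> \<psi>0_cont in auto)
  hence WOT: "ereal W \<le> entropic_OT e \<Omega> \<sigma> h'" unfolding entropic_OT_def otW[symmetric] by simp
  have pw: "\<phi>0 X * h0 X + c * (h0 X)\<^sup>2 \<le> \<phi>0 X * h' X + c * (h' X)\<^sup>2" for X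
  proof -
    have phi: "\<phi>0 X = - 2 * c * h0 X" unfolding h0_def c_def using f g by (simp add: field_simps)
    have "\<phi>0 X * h' X + c * (h' X)\<^sup>2 - (\<phi>0 X * h0 X + c * (h0 X)\<^sup>2) = c * (h' X - h0 X)\<^sup>2"
      unfolding phi by (simp add: algebra_simps power2_eq_square)
    moreover have "0 \<le> c * (h' X - h0 X)\<^sup>2" using c by simp
    ultimately show ?thesis by linarith
  qed
  have "(\<integral>X. \<phi>0 X * h0 X + c * (h0 X)\<^sup>2 \<partial>\<mu>) \<le> (\<integral>X. \<phi>0 X * h' X + c * (h' X)\<^sup>2 \<partial>\<mu>)"
    by (rule integral_mono) (use int_phi0h0 int_h0sq iph hsq pw in auto)
  hence ineq: "(\<integral>X. \<phi>0 X * h0 X \<partial>\<mu>) + c * (\<integral>X. (h0 X)\<^sup>2 \<partial>\<mu>) \<le> (\<integral>X. \<phi>0 X * h' X \<partial>\<mu>) + c * (\<integral>X. (h' X)\<^sup>2 \<partial>\<mu>)"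
    using int_phi0h0 int_h0sq iph hsq by simp
  have "entropic_OT e \<Omega> \<sigma> h0 + ereal (c * (\<integral>X. (h0 X)\<^sup>2 \<partial>\<mu>)) = ereal (V0 + c * (\<integral>X. (h0 X)\<^sup>2 \<partial>\<mu>))"
    unfolding OT_eq by simp
  also have "\<dots> \<le> ereal (W + c * (\<integral>X. (h' X)\<^sup>2 \<partial>\<mu>))"
    using ineq unfolding V0_def W_def by simp
  also have "\<dots> = ereal W + ereal (c * (\<integral>X. (h' X)\<^sup>2 \<partial>\<mu>))" by simp
  also have "\<dots> \<le> entropic_OT e \<Omega> \<sigma> h' + ereal (c * (\<integral>X. (h' X)\<^sup>2 \<partial>\<mu>))"
    using WOT by (rule add_right_mono)
  finally show ?thesis unfolding c_def .
qed

end

theorem proposition3: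
  fixes f g \<epsilon> :: real and \<Omega> :: "(real^2) set" and \<sigma> :: "(real^2) measure"
  assumes "f > 0" and "g > 0" and "\<epsilon> > 0"
    and "open \<Omega>" and "connected \<Omega>" and "convex \<Omega>" and "bounded \<Omega>" and "\<Omega> \<noteq> {}"
    and "sets \<sigma> = sets borel" and "finite_measure \<sigma>"
    and "\<exists>C. compact C \<and> emeasure \<sigma> (UNIV - C) = 0"
  shows "\<exists>\<phi> \<psi>. dual_maximizer f g \<Omega> \<sigma> \<epsilon> \<phi> \<psi>
     \<and> (\<forall>\<phi>' \<psi>'. dual_maximizer f g \<Omega> \<sigma> \<epsilon> \<phi>' \<psi>' \<longrightarrow>
           (\<forall>X\<in>\<Omega>. \<phi>' X = \<phi> X) \<and> (AE Y in \<sigma>. \<psi>' Y = \<psi> Y))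
     \<and> (\<forall>Y. \<psi> Y = - \<epsilon> * ln (\<integral>X. exp (\<phi> X / \<epsilon>) * gauss_kernel \<epsilon> X Y \<partial>lebesgue_on \<Omega>))
     \<and> (\<forall>X\<in>\<Omega>. \<phi> X = - \<epsilon> * lambert_W0 (g / (\<epsilon> * f\<^sup>2) *
             (\<integral>Y. exp (\<psi> Y / \<epsilon>) * gauss_kernel \<epsilon> X Y \<partial>\<sigma>)))
     \<and> (let h = (\<lambda>X. - (f\<^sup>2 / g) * \<phi> X) in
          entropic_OT \<epsilon> \<Omega> \<sigma> h = ot_obj \<epsilon> \<Omega> \<sigma> h \<phi> \<psi>
          \<and> nonneg_L2 \<Omega> h
          \<and> (\<forall>h'. nonneg_L2 \<Omega> h' \<longrightarrow>
               entropic_OT \<epsilon> \<Omega> \<sigma> h + ereal (g / (2 * f\<^sup>2) * (\<integral>X. (h X)\<^sup>2 \<partial>lebesgue_on \<Omega>))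
               \<le> entropic_OT \<epsilon> \<Omega> \<sigma> h' + ereal (g / (2 * f\<^sup>2) * (\<integral>X. (h' X)\<^sup>2 \<partial>lebesgue_on \<Omega>))))
     \<and> (\<forall>Y. (\<psi> has_derivative
             (\<lambda>v. (Y - (\<integral>X. (exp ((\<phi> X + \<psi> Y) / \<epsilon>) * gauss_kernel \<epsilon> X Y) *\<^sub>R X \<partial>lebesgue_on \<Omega>)) \<bullet> v))
           (at Y))"
proof -
  obtain C where C: "compact C" "emeasure \<sigma> (UNIV - C) = 0" using assms(11) by blast
  interpret setting f g \<epsilon> \<Omega> \<sigma> C
    by (rule setting.intro[OF assms(1,2,3,4,7,8,9,10) C(1,2)])
  have hh: "(\<lambda>X. - (f\<^sup>2 / g) * \<phi>0 X) = h0" unfolding h0_def by (rule refl)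
  have A: "dual_maximizer f g \<Omega> \<sigma> \<epsilon> \<phi>0 \<psi>0" by (rule dual_max0)
  have B: "\<forall>\<phi>' \<psi>'. dual_maximizer f g \<Omega> \<sigma> \<epsilon> \<phi>' \<psi>' \<longrightarrow>
           (\<forall>X\<in>\<Omega>. \<phi>' X = \<phi>0 X) \<and> (AE Y in \<sigma>. \<psi>' Y = \<psi>0 Y)"
    using dual_unique by blast
  have D: "\<forall>Y. \<psi>0 Y = - \<epsilon> * ln (\<integral>X. exp (\<phi>0 X / \<epsilon>) * gauss_kernel \<epsilon> X Y \<partial>lebesgue_on \<Omega>)"
    unfolding \<psi>0_def Psi_def Fint_def by simp
  have E: "\<forall>X\<in>\<Omega>. \<phi>0 X = - \<epsilon> * lambert_W0 (g / (\<epsilon> * f\<^sup>2) * (\<integral>Y. exp (\<psi>0 Y / \<epsilon>) * gauss_kernel \<epsilon> X Y \<partial>\<sigma>))"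
  proof
    fix X assume "X \<in> \<Omega>"
    show "\<phi>0 X = - \<epsilon> * lambert_W0 (g / (\<epsilon> * f\<^sup>2) * (\<integral>Y. exp (\<psi>0 Y / \<epsilon>) * gauss_kernel \<epsilon> X Y \<partial>\<sigma>))"
      using \<phi>0_fix[of X] unfolding Tm_def kk_def Aint_def \<psi>0_def .
  qed
  have F: "let h = (\<lambda>X. - (f\<^sup>2 / g) * \<phi>0 X) in
          entropic_OT \<epsilon> \<Omega> \<sigma> h = ot_obj \<epsilon> \<Omega> \<sigma> h \<phi>0 \<psi>0
          \<and> nonneg_L2 \<Omega> h
          \<and> (\<forall>h'. nonneg_L2 \<Omega> h' \<longrightarrow>
               entropic_OT \<epsilon> \<Omega> \<sigma> h + ereal (g / (2 * f\<^sup>2) * (\<integral>X. (h X)\<^sup>2 \<partial>lebesgue_on \<Omega>))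
               \<le> entropic_OT \<epsilon> \<Omega> \<sigma> h' + ereal (g / (2 * f\<^sup>2) * (\<integral>X. (h' X)\<^sup>2 \<partial>lebesgue_on \<Omega>)))"
    unfolding Let_def hh using OT_eq ot_0 nonneg_h0 OT_min by simp
  have G: "\<forall>Y. (\<psi>0 has_derivative
             (\<lambda>v. (Y - (\<integral>X. (exp ((\<phi>0 X + \<psi>0 Y) / \<epsilon>) * gauss_kernel \<epsilon> X Y) *\<^sub>R X \<partial>lebesgue_on \<Omega>)) \<bullet> v))
           (at Y)" using psi0_deriv by blast
  show ?thesis
    by (intro exI[of _ \<phi>0] exI[of _ \<psi>0] conjI) (fact A B D E F G)+
qed

end
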